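(* Let $p \neq 2$ be a prime and let $E_T$ be the elliptic curve over $\mathbf{F}_p(T)$ given by $y^2 = x^3 + T x^2 - T^3 x$. The point $Q = (-T, T^2) \in E_T(\mathbf{F}_p(T))$ has infinite order. In particular, for any field $L$ of characteristic $p$ and any $t \in L$ transcendental over $\mathbf{F}_p$, the point $Q_t = (-t, t^2)$ on the elliptic curve $E_t : y^2 = x^3 + t x^2 - t^3 x$ over $L$ (obtained via the embedding $\mathbf{F}_p(T) \to L$, $T \mapsto t$) has infinite order in $E_t(L)$. *)

theory Defs
  imports "HOL-Computational_Algebra.Polynomial" "HOL-Computational_Algebra.Fraction_Field"
    "Berlekamp_Zassenhaus.Finite_Field"
begin

text \<open>Points of a Weierstrass curve y^2 = x^3 + a2 x^2 + a4 x over a field, in affine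
  coordinates; None is the point at infinity O.\<close>
type_synonym 'a ec_point = "('a \<times> 'a) option"

definition on_curve :: "'a::field \<Rightarrow> 'a \<Rightarrow> 'a ec_point \<Rightarrow> bool" where
  "on_curve a2 a4 P = (case P of None \<Rightarrow> True
     | Some (x, y) \<Rightarrow> y ^ 2 = x ^ 3 + a2 * x ^ 2 + a4 * x)"

definition ec_add :: "'a::field \<Rightarrow> 'a \<Rightarrow> 'a ec_point \<Rightarrow> 'a ec_point \<Rightarrow> 'a ec_point" where
  "ec_add a2 a4 P R = (case P of None \<Rightarrow> R | Some (x1, y1) \<Rightarrow>
     (case R of None \<Rightarrow> P | Some (x2, y2) \<Rightarrow>
       (if x1 = x2 \<and> y1 + y2 = 0 then None
        else
          let l = (if x1 = x2 then (3 * x1 ^ 2 + 2 * a2 * x1 + a4) / (2 * y1)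
                   else (y2 - y1) / (x2 - x1));
              x3 = l ^ 2 - a2 - x1 - x2;
              y3 = - (l * (x3 - x1) + y1)
          in Some (x3, y3))))"

primrec ec_mult :: "'a::field \<Rightarrow> 'a \<Rightarrow> nat \<Rightarrow> 'a ec_point \<Rightarrow> 'a ec_point" where
  "ec_mult a2 a4 0 P = None"
| "ec_mult a2 a4 (Suc n) P = ec_add a2 a4 P (ec_mult a2 a4 n P)"

definition ec_infinite_order :: "'a::field \<Rightarrow> 'a \<Rightarrow> 'a ec_point \<Rightarrow> bool" where
  "ec_infinite_order a2 a4 P = (\<forall>n::nat. n > 0 \<longrightarrow> ec_mult a2 a4 n P \<noteq> None)"

text \<open>t is transcendental over the prime subfield (the image of the integers):
  no nonzero polynomial with coefficients in the prime subfield vanishes at t.\<close>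
definition transcendental_over_prime_field :: "'a::field \<Rightarrow> bool" where
  "transcendental_over_prime_field t =
     (\<forall>q :: 'a poly. q \<noteq> 0 \<and> (\<forall>i. coeff q i \<in> range of_int) \<longrightarrow> poly q t \<noteq> 0)"

end

theory Submission
  imports Defs
begin


locale valn = fixes v :: "'k::field \<Rightarrow> int"
  assumes vmult: "x \<noteq> 0 \<Longrightarrow> y \<noteq> 0 \<Longrightarrow> v (x*y) = v x + v y"
  and vadd: "x \<noteq> 0 \<Longrightarrow> y \<noteq> 0 \<Longrightarrow> x + y \<noteq> 0 \<Longrightarrow> min (v x) (v y) \<le> v (x + y)"
begin

lemma v1: "v 1 = 0"
  using vmult[of 1 1] by simp

lemma vm1: "v (-1) = 0"
  using vmult[of "-1" "-1"] v1 by simp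

lemma vuminus: "v (- x) = v x"
proof (cases "x = 0")
  case False
  then show ?thesis using vmult[of "-1" x] vm1 by simp
qed simp

lemma vinv: "x \<noteq> 0 \<Longrightarrow> v (inverse x) = - v x"
  using vmult[of x "inverse x"] v1 by simp

lemma vdiv: "x \<noteq> 0 \<Longrightarrow> y \<noteq> 0 \<Longrightarrow> v (x / y) = v x - v y"
  by (simp add: divide_inverse vmult vinv)

lemma vpow: "x \<noteq> 0 \<Longrightarrow> v (x ^ n) = int n * v x"
  by (induction n) (simp_all add: v1 vmult algebra_simps)

definition vge :: "int \<Rightarrow> 'k \<Rightarrow> bool" where
  "vge c x \<longleftrightarrow> x = 0 \<or> c \<le> v x"

lemma vge_0[simp]: "vge c 0" by (simp add: vge_def)

lemma vgeI: "c \<le> v x \<Longrightarrow> vge c x" by (simp add: vge_def)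

lemma vgeD: "vge c x \<Longrightarrow> x \<noteq> 0 \<Longrightarrow> c \<le> v x" by (simp add: vge_def)

lemma vge_add: "vge c x \<Longrightarrow> vge c y \<Longrightarrow> vge c (x + y)"
  unfolding vge_def using vadd[of x y] by fastforce

lemma vge_uminus: "vge c x \<Longrightarrow> vge c (- x)"
  unfolding vge_def by (simp add: vuminus)

lemma vge_diff: "vge c x \<Longrightarrow> vge c y \<Longrightarrow> vge c (x - y)"
  using vge_add[of c x "-y"] vge_uminus[of c y] by simp

lemma vge_mult: "vge c x \<Longrightarrow> vge d y \<Longrightarrow> vge (c + d) (x * y)"
  unfolding vge_def by (cases "x = 0"; cases "y = 0") (auto simp: vmult)

lemma vge_mono: "vge c x \<Longrightarrow> d \<le> c \<Longrightarrow> vge d x"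
  unfolding vge_def by auto

lemma vge_div: "vge c x \<Longrightarrow> y \<noteq> 0 \<Longrightarrow> vge (c - v y) (x / y)"
  unfolding vge_def by (cases "x = 0") (auto simp: vdiv)

lemma vge_pow: "vge c x \<Longrightarrow> vge (int n * c) (x ^ n)"
  unfolding vge_def by (cases "x = 0") (auto simp: vpow mult_left_mono power_0_left v1)

lemma vge_self: "vge (v x) x" by (simp add: vge_def)

lemma vstrict:
  assumes "x \<noteq> 0" "vge (v x + 1) y"
  shows "x + y \<noteq> 0 \<and> v (x + y) = v x"
proof (cases "y = 0")
  case True then show ?thesis using assms by simp
next
  case False
  then have lt: "v x < v y" using assms by (simp add: vge_def)
  have nz: "x + y \<noteq> 0"
  proof
    assume "x + y = 0"
    then have "y = - x" by (simp add: add_eq_0_iff)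
    then show False using lt by (simp add: vuminus)
  qed
  have "min (v x) (v y) \<le> v (x + y)" using vadd[OF assms(1) False nz] .
  then have ge: "v x \<le> v (x + y)" using lt by simp
  have "min (v (x + y)) (v (- y)) \<le> v ((x + y) + (- y))"
    using vadd[of "x + y" "- y"] nz False assms(1) by simp
  then have "min (v (x + y)) (v y) \<le> v x" by (simp add: vuminus)
  then have "v (x + y) \<le> v x" using lt by linarith
  then show ?thesis using ge nz by simp
qed

end

definition ord0 :: "'a::field poly fract \<Rightarrow> int" where
  "ord0 f = (SOME k. \<exists>a b. a \<noteq> 0 \<and> b \<noteq> 0 \<and> f = Fract a b \<and> k = int (order 0 a) - int (order 0 b))"

definition ordi :: "'a::field poly fract \<Rightarrow> int" where
  "ordi f = (SOME k. \<exists>a b. a \<noteq> 0 \<and> b \<noteq> 0 \<and> f = Fract a b \<and> k = int (degree b) - int (degree a))"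

lemma ord0_Fract:
  fixes a b :: "'a::field poly"
  assumes "a \<noteq> 0" "b \<noteq> 0"
  shows "ord0 (Fract a b) = int (order 0 a) - int (order 0 b)"
proof -
  let ?P = "\<lambda>k. \<exists>a' b'. a' \<noteq> 0 \<and> b' \<noteq> 0 \<and> Fract a b = Fract a' b' \<and> k = int (order 0 a') - int (order 0 b')"
  have "?P (int (order 0 a) - int (order 0 b))" using assms by blast
  then have "?P (SOME k. ?P k)" by (rule someI)
  then obtain a' b' where h: "a' \<noteq> 0" "b' \<noteq> 0" "Fract a b = Fract a' b'"
    "(SOME k. ?P k) = int (order 0 a') - int (order 0 b')" by blast
  from h(3) assms h(2) have "a * b' = a' * b" by (simp add: eq_fract)
  then have "order 0 (a * b') = order 0 (a' * b)" by simp
  then have "order 0 a + order 0 b' = order 0 a' + order 0 b"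
    using assms h by (simp add: order_mult)
  then show ?thesis unfolding ord0_def using h(4) by simp
qed

lemma ordi_Fract:
  fixes a b :: "'a::field poly"
  assumes "a \<noteq> 0" "b \<noteq> 0"
  shows "ordi (Fract a b) = int (degree b) - int (degree a)"
proof -
  let ?P = "\<lambda>k. \<exists>a' b'. a' \<noteq> 0 \<and> b' \<noteq> 0 \<and> Fract a b = Fract a' b' \<and> k = int (degree b') - int (degree a')"
  have "?P (int (degree b) - int (degree a))" using assms by blast
  then have "?P (SOME k. ?P k)" by (rule someI)
  then obtain a' b' where h: "a' \<noteq> 0" "b' \<noteq> 0" "Fract a b = Fract a' b'"
    "(SOME k. ?P k) = int (degree b') - int (degree a')" by blast
  from h(3) assms h(2) have "a * b' = a' * b" by (simp add: eq_fract)
  then have "degree (a * b') = degree (a' * b)" by simp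
  then have "degree a + degree b' = degree a' + degree b"
    using assms h by (simp add: degree_mult_eq)
  then show ?thesis unfolding ordi_def using h(4) by simp
qed

lemma Fract_nz_cases:
  fixes x :: "'a::idom fract"
  assumes "x \<noteq> 0"
  obtains a b where "x = Fract a b" "a \<noteq> 0" "b \<noteq> 0"
  using assms by (cases x rule: Fract_cases_nonzero) auto

lemma order_add_ge:
  fixes p q :: "'a::field poly"
  assumes "p + q \<noteq> 0"
  shows "min (order c p) (order c q) \<le> order c (p + q)"
proof -
  let ?m = "min (order c p) (order c q)"
  have "[:-c,1:]^?m dvd p" by (meson min.cobounded1 order_divides)
  moreover have "[:-c,1:]^?m dvd q" by (meson min.cobounded2 order_divides)
  ultimately have "[:-c,1:]^?m dvd p + q" by simp
  then show ?thesis using assms order_divides by blast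
qed

interpretation v0: valn "ord0 :: 'a::field poly fract \<Rightarrow> int"
proof
  fix x y :: "'a poly fract"
  assume x: "x \<noteq> 0" and y: "y \<noteq> 0"
  obtain a b where ab: "x = Fract a b" "a \<noteq> 0" "b \<noteq> 0" using x by (rule Fract_nz_cases)
  obtain c d where cd: "y = Fract c d" "c \<noteq> 0" "d \<noteq> 0" using y by (rule Fract_nz_cases)
  show "ord0 (x * y) = ord0 x + ord0 y"
    using ab cd by (simp add: ord0_Fract order_mult)
  assume s: "x + y \<noteq> 0"
  have sum: "x + y = Fract (a * d + c * b) (b * d)" using ab cd by simp
  have nz: "a * d + c * b \<noteq> 0" using s sum by (auto simp: fract_collapse)
  have "min (order 0 (a*d)) (order 0 (c*b)) \<le> order 0 (a * d + c * b)"
    using order_add_ge[OF nz] .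
  then show "min (ord0 x) (ord0 y) \<le> ord0 (x + y)"
    using ab cd nz sum by (simp add: ord0_Fract order_mult)
qed

interpretation vi: valn "ordi :: 'a::field poly fract \<Rightarrow> int"
proof
  fix x y :: "'a poly fract"
  assume x: "x \<noteq> 0" and y: "y \<noteq> 0"
  obtain a b where ab: "x = Fract a b" "a \<noteq> 0" "b \<noteq> 0" using x by (rule Fract_nz_cases)
  obtain c d where cd: "y = Fract c d" "c \<noteq> 0" "d \<noteq> 0" using y by (rule Fract_nz_cases)
  show "ordi (x * y) = ordi x + ordi y"
    using ab cd by (simp add: ordi_Fract degree_mult_eq)
  assume s: "x + y \<noteq> 0"
  have sum: "x + y = Fract (a * d + c * b) (b * d)" using ab cd by simp
  have nz: "a * d + c * b \<noteq> 0" using s sum by (auto simp: fract_collapse)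
  have "degree (a * d + c * b) \<le> max (degree (a*d)) (degree (c*b))"
    by (rule degree_add_le_max)
  then show "min (ordi x) (ordi y) \<le> ordi (x + y)"
    using ab cd nz sum by (simp add: ordi_Fract degree_mult_eq)
qed

definition Wv :: "'a::field poly fract" where "Wv = Fract [:0,1:] 1"

lemma Wv_nz[simp]: "Wv \<noteq> 0" by (simp add: Wv_def Zero_fract_def eq_fract)
lemma ord0_W[simp]: "ord0 Wv = 1"
  using order_power_n_n[of 0 1] by (simp add: Wv_def ord0_Fract)
lemma ordi_W[simp]: "ordi Wv = -1"
  by (simp add: Wv_def ordi_Fract)

lemma const_fract: "(of_nat n :: 'a::field poly fract) = Fract [:of_nat n:] 1"
  by (simp add: of_nat_fract of_nat_poly)

lemma ord0_const: "(c::'a::field) \<noteq> 0 \<Longrightarrow> ord0 (Fract [:c:] 1) = 0"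
  by (simp add: ord0_Fract order_0I)
lemma ordi_const: "(c::'a::field) \<noteq> 0 \<Longrightarrow> ordi (Fract [:c:] 1) = 0"
  by (simp add: ordi_Fract)


abbreviation pX :: "'a::field poly" where "pX \<equiv> [:0,1:]"

lemma bezout_poly:
  fixes a b :: "'a::field poly"
  assumes "b \<noteq> 0"
  obtains d u v where "d = u * a + v * b" "d dvd a" "d dvd b" "d \<noteq> 0"
proof -
  let ?S = "{p. \<exists>u v. p = u * a + v * b \<and> p \<noteq> 0}"
  have "b = 0 * a + 1 * b" by simp
  then have bS: "b \<in> ?S" using assms by blast
  define n where "n = (LEAST n. \<exists>p \<in> ?S. degree p = n)"
  have "\<exists>p \<in> ?S. degree p = n" unfolding n_def by (rule LeastI_ex) (use bS in blast)
  then obtain d u v where d: "d = u * a + v * b" "d \<noteq> 0" "degree d = n" by blast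
  have mn: "n \<le> degree p" if "p \<in> ?S" for p unfolding n_def
    by (rule Least_le) (use that in blast)
  have dv: "d dvd x" if x: "x = u' * a + v' * b" for x u' v'
  proof (rule ccontr)
    assume nd: "\<not> d dvd x"
    have r: "x mod d = (u' - x div d * u) * a + (v' - x div d * v) * b"
      using div_mult_mod_eq[of x d] x d(1) by (simp add: algebra_simps)
    have "x mod d \<noteq> 0" using nd by (simp add: mod_eq_0_iff_dvd)
    then have "x mod d \<in> ?S" using r by blast
    then have "n \<le> degree (x mod d)" by (rule mn)
    moreover have "degree (x mod d) < degree d" using degree_mod_less_degree[OF d(2) nd] .
    ultimately show False using d(3) by simp
  qed
  have "d dvd a" by (rule dv[of a 1 0]) simp
  moreover have "d dvd b" by (rule dv[of b 0 1]) simp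
  ultimately show ?thesis using that d by blast
qed

lemma coprime_bezout:
  fixes a b :: "'a::field poly"
  assumes "coprime a b"
  obtains u v where "u * a + v * b = 1"
proof (cases "b = 0")
  case True
  then have "is_unit a" using assms by simp
  then obtain e where "a * e = 1" by (metis dvdE)
  then show ?thesis using that[of e 0] by (simp add: mult.commute)
next
  case False
  obtain d u v where d: "d = u * a + v * b" "d dvd a" "d dvd b" "d \<noteq> 0"
    using bezout_poly[OF False] by blast
  have "is_unit d" using d assms coprime_common_divisor by blast
  then obtain e where e: "d * e = 1" by (metis dvdE)
  have "(e * u) * a + (e * v) * b = 1" using e d(1) by (simp add: algebra_simps)
  then show ?thesis using that by blast
qed

lemma euclid_poly:
  fixes a b c :: "'a::field poly"
  assumes "coprime a c" "a dvd c * b"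
  shows "a dvd b"
proof -
  obtain u v where uv: "u * a + v * c = 1" using coprime_bezout[OF assms(1)] by blast
  have "b = (u * a + v * c) * b" using uv by simp
  also have "\<dots> = a * (u * b) + v * (c * b)" by (simp add: algebra_simps)
  finally have "b = a * (u * b) + v * (c * b)" .
  moreover have "a dvd v * (c * b)" using assms(2) by simp
  moreover have "a dvd a * (u * b)" by simp
  ultimately show ?thesis by (metis dvd_add)
qed

lemma coprime_dvd_left:
  fixes a b c :: "'a::field poly"
  assumes "coprime a b" "c dvd a" shows "coprime c b"
  using assms by (meson coprimeI coprime_common_divisor dvd_trans)

lemma coprime_mult2:
  fixes a b c :: "'a::field poly"
  assumes "coprime a b" "coprime a c" shows "coprime a (b * c)"
proof (rule coprimeI)
  fix d assume d: "d dvd a" "d dvd b * c"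
  have "coprime d b" using coprime_dvd_left[OF assms(1) d(1)] .
  then have "d dvd c" using d(2) euclid_poly by blast
  then show "is_unit d" using d(1) assms(2) coprime_common_divisor by blast
qed

lemma coprime_pow2:
  fixes a b :: "'a::field poly"
  assumes "coprime a b" shows "coprime a (b ^ n)"
  by (induction n) (simp_all add: coprime_mult2 assms)

lemma coprime_pow1:
  fixes a b :: "'a::field poly"
  assumes "coprime a b" shows "coprime (a ^ n) b"
  using coprime_pow2[of b a n] assms by (simp add: coprime_commute)

lemma coprime_rep:
  fixes x :: "'a::field poly fract"
  obtains a b where "b \<noteq> 0" "coprime a b" "x = Fract a b"
proof -
  obtain a0 b0 where x: "x = Fract a0 b0" "b0 \<noteq> 0" by (cases x) auto
  obtain d u v where d: "d = u * a0 + v * b0" "d dvd a0" "d dvd b0" "d \<noteq> 0"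
    using bezout_poly[OF x(2)] by blast
  obtain a where a: "a0 = d * a" using d(2) by blast
  obtain b where b: "b0 = d * b" using d(3) by blast
  have "d * (u * a + v * b) = d * 1" using d(1) a b by (simp add: algebra_simps)
  then have uv: "u * a + v * b = 1" using d(4) mult_left_cancel by blast
  have cp: "coprime a b"
  proof (rule coprimeI)
    fix c assume "c dvd a" "c dvd b"
    then have "c dvd u * a + v * b" by simp
    then show "is_unit c" using uv by simp
  qed
  have "b \<noteq> 0" using x b by auto
  moreover have "x = Fract a b" using x a b d(4) by (simp add: mult_fract_cancel)
  ultimately show ?thesis using that cp by blast
qed

lemma coprime_rep_unique:
  fixes a b c d :: "'a::field poly"
  assumes "b \<noteq> 0" "d \<noteq> 0" "coprime a b" "coprime c d" "Fract a b = Fract c d"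
  shows "degree a = degree c" "degree b = degree d" "order 0 b = order 0 d"
proof -
  have e: "a * d = c * b" using assms by (simp add: eq_fract)
  have "b dvd a * d" using e by simp
  then have bd: "b dvd d" using assms(3) euclid_poly[of b a d] coprime_commute by blast
  have "d dvd c * b" using e by (metis dvd_triv_right)
  then have db: "d dvd b" using assms(4) euclid_poly[of d c b] coprime_commute by blast
  show "degree b = degree d" using bd db assms(1,2) dvd_imp_degree_le le_antisym by metis
  obtain u where u: "d = b * u" using bd by blast
  obtain u' where u': "b = d * u'" using db by blast
  have "b * (u * u') = b * 1" using u u' by (metis mult.assoc mult_1_right)
  then have uu: "u * u' = 1" using mult_left_cancel[OF assms(1)] by blast
  then have un: "u \<noteq> 0" by auto
  have u'nz: "u' \<noteq> 0" using uu by auto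
  have "degree u = 0" using degree_mult_eq[OF un u'nz] uu by simp
  then have "order 0 u = 0" using un by (auto intro!: order_0I elim!: degree_eq_zeroE)
  then show "order 0 b = order 0 d" using u assms un by (simp add: order_mult)
  show "degree a = degree c"
  proof (cases "a = 0")
    case True
    then have "c = 0" using e assms by simp
    then show ?thesis using True by simp
  next
    case False
    then have "c \<noteq> 0" using e assms by auto
    then have "degree a + degree d = degree c + degree b"
      using degree_mult_eq[of a d] degree_mult_eq[of c b] e False assms \<open>c \<noteq> 0\<close> by simp
    then show ?thesis using \<open>degree b = degree d\<close> by simp
  qed
qed

definition dg :: "'a::field poly fract \<Rightarrow> nat" where
  "dg x = (SOME n. \<exists>a b. b \<noteq> 0 \<and> coprime a b \<and> x = Fract a b \<and> n = max (degree a) (degree b))"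

lemma dg_rep:
  fixes a b :: "'a::field poly"
  assumes "b \<noteq> 0" "coprime a b"
  shows "dg (Fract a b) = max (degree a) (degree b)"
proof -
  let ?P = "\<lambda>n. \<exists>a' b'. b' \<noteq> 0 \<and> coprime a' b' \<and> Fract a b = Fract a' b' \<and> n = max (degree a') (degree b')"
  have "?P (max (degree a) (degree b))" using assms by blast
  then have "?P (SOME n. ?P n)" by (rule someI)
  then obtain a' b' where h: "b' \<noteq> 0" "coprime a' b'" "Fract a b = Fract a' b'"
    "(SOME n. ?P n) = max (degree a') (degree b')" by blast
  show ?thesis unfolding dg_def using h coprime_rep_unique[OF assms(1) h(1) assms(2) h(2) h(3)] by simp
qed

lemma pX_not_unit: "\<not> is_unit (pX :: 'a::field poly)"
  using is_unit_iff_degree[of "pX :: 'a poly"] by simp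

lemma rep_order:
  fixes a b :: "'a::field poly"
  assumes "b \<noteq> 0" "coprime a b" "a \<noteq> 0"
  shows "int (order 0 b) = max 0 (- ord0 (Fract a b))"
proof -
  have "order 0 a = 0 \<or> order 0 b = 0"
  proof (rule ccontr)
    assume "\<not> ?thesis"
    then have "pX dvd a" "pX dvd b" using order_divides[of 0 1] by (auto simp: Suc_le_eq)
    then have "is_unit (pX :: 'a poly)" using assms(2) coprime_common_divisor by blast
    then show False using pX_not_unit by blast
  qed
  then show ?thesis
    by (elim disjE) (simp_all add: ord0_Fract[OF assms(3,1)])
qed

lemma rep_dg:
  fixes a b :: "'a::field poly"
  assumes "b \<noteq> 0" "coprime a b" "a \<noteq> 0"
  shows "int (dg (Fract a b)) = int (degree b) + max 0 (- ordi (Fract a b))"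
  using assms by (simp add: dg_rep ordi_Fract)

lemma rep_zero:
  fixes b :: "'a::field poly"
  assumes "b \<noteq> 0" "coprime 0 b"
  shows "degree b = 0" "order 0 b = 0"
proof -
  have "is_unit b" using assms(2) by simp
  then show "degree b = 0" using assms(1) is_unit_iff_degree by blast
  then show "order 0 b = 0" using assms(1) by (auto intro!: order_0I elim!: degree_eq_zeroE)
qed

lemma coprime_pX:
  fixes q :: "'a::field poly"
  assumes "\<not> pX dvd q"
  shows "coprime q pX"
proof (rule coprimeI)
  fix c assume c: "c dvd q" "c dvd pX"
  obtain e where e: "pX = c * e" using c(2) by blast
  have cn: "c \<noteq> 0" "e \<noteq> 0" using e by auto
  have "degree (c * e) = 1" unfolding e[symmetric] by simp
  then have "degree c + degree e = 1" using degree_mult_eq[OF cn] by simp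
  then consider "degree c = 0" | "degree e = 0" by linarith
  then show "is_unit c"
  proof cases
    case 1 then show ?thesis using cn is_unit_iff_degree by blast
  next
    case 2
    then have "is_unit e" using cn is_unit_iff_degree by blast
    then have "pX dvd c" using e by (metis dvd_mult_unit_iff dvd_refl)
    then have "pX dvd q" using c(1) dvd_trans by blast
    then show ?thesis using assms by blast
  qed
qed

lemma Nid_gen:
  fixes A B x :: "'b::comm_ring_1"
  shows "- 2 * x^2 * A^2 - 2 * (1 + x^4) * A * B + 2 * x^2 * B^2 = (A + x^2 * B) * (- 2 * (x^2 * A + B)) + 4 * x^2 * B^2"
  by (simp add: power2_eq_square power4_eq_xxxx algebra_simps)

lemma key_poly:
  fixes A B Bp Bm M N C :: "'a::field poly"
  assumes two: "(2::'a) \<noteq> 0"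
  and cp: "coprime A B"
  and Bp: "Bp \<noteq> 0" and Bm: "Bm \<noteq> 0"
  and M: "M = A + pX^2 * B" and Mnz: "M \<noteq> 0"
  and N: "N = - 2 * pX^2 * A^2 - 2 * (1 + pX^4) * A * B + 2 * pX^2 * B^2"
  and eq: "C * M^2 = N * (Bp * Bm)"
  shows "2 * degree M + order 0 Bp + order 0 Bm \<le> degree Bp + degree Bm + 2 * order 0 M"
proof -
  define z where "z = order 0 M"
  define kp where "kp = order 0 Bp"
  define km where "km = order 0 Bm"
  obtain M' where M': "M = pX ^ z * M'" "\<not> pX dvd M'"
    using order_decomp[OF Mnz, of 0] unfolding z_def by auto
  obtain Rp where Rp: "Bp = pX ^ kp * Rp" "\<not> pX dvd Rp"
    using order_decomp[OF Bp, of 0] unfolding kp_def by auto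
  obtain Rm where Rm: "Bm = pX ^ km * Rm" "\<not> pX dvd Rm"
    using order_decomp[OF Bm, of 0] unfolding km_def by auto
  have M'nz: "M' \<noteq> 0" using M' Mnz by auto
  have Rpnz: "Rp \<noteq> 0" using Rp Bp by auto
  have Rmnz: "Rm \<noteq> 0" using Rm Bm by auto
  have Nid: "N = M * (- 2 * (pX^2 * A + B)) + 4 * pX^2 * B^2"
    unfolding N M by (rule Nid_gen)
  have M'M: "M' dvd M" using M' by (metis dvd_triv_right)
  have cMB: "coprime M' B"
  proof (rule coprimeI)
    fix c assume c: "c dvd M'" "c dvd B"
    then have "c dvd M" using M'M dvd_trans by blast
    moreover have "c dvd pX^2 * B" using c by simp
    ultimately have "c dvd M - pX^2 * B" by (rule dvd_diff)
    then have "c dvd A" using M by simp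
    then show "is_unit c" using c cp coprime_common_divisor by blast
  qed
  have cMX: "coprime M' pX" using M' coprime_pX by blast
  have u4: "is_unit (4 :: 'a poly)"
  proof -
    have "(4::'a) \<noteq> 0" using two by (metis mult_2 mult_eq_0_iff numeral_Bit0 one_add_one)
    then show ?thesis by (simp add: is_unit_poly_iff numeral_poly)
  qed
  have "coprime M' 4" using u4 by (meson coprimeI dvd_unit_imp_unit)
  then have c4: "coprime M' (4 * pX^2 * B^2)"
    by (rule coprime_mult2[OF coprime_mult2 coprime_pow2[OF cMB]]) (rule coprime_pow2[OF cMX])
  have cMN: "coprime M' N"
  proof (rule coprimeI)
    fix c assume c: "c dvd M'" "c dvd N"
    then have "c dvd M" using M'M dvd_trans by blast
    then have "c dvd M * (- 2 * (pX^2 * A + B))" by simp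
    then have "c dvd N - M * (- 2 * (pX^2 * A + B))" using c(2) by (rule dvd_diff[rotated])
    then have "c dvd 4 * pX^2 * B^2" using Nid by simp
    then show "is_unit c" using c(1) c4 coprime_common_divisor by blast
  qed
  have "M'^2 dvd M^2" using M'M by (simp add: dvd_power_same)
  also have "M^2 dvd N * (Bp * Bm)" using eq by (metis dvd_triv_right)
  finally have "M'^2 dvd N * (Bp * Bm)" .
  then have d1: "M'^2 dvd Bp * Bm" using coprime_pow1[OF cMN, of 2] euclid_poly by blast
  have "Bp * Bm = pX ^ (kp + km) * (Rp * Rm)"
    using Rp Rm by (simp add: power_add algebra_simps)
  with d1 have "M'^2 dvd pX ^ (kp + km) * (Rp * Rm)" by simp
  moreover have "coprime (M'^2) (pX ^ (kp + km))" using cMX by (simp add: coprime_pow1 coprime_pow2)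
  ultimately have "M'^2 dvd Rp * Rm" using euclid_poly by blast
  moreover have "Rp * Rm \<noteq> 0" using Rpnz Rmnz by simp
  ultimately have "degree (M'^2) \<le> degree (Rp * Rm)" by (rule dvd_imp_degree_le)
  then have dgi: "2 * degree M' \<le> degree Rp + degree Rm"
    using Rpnz Rmnz M'nz by (simp add: degree_mult_eq degree_power_eq)
  have dl: "degree (pX ^ k * q) = k + degree q" if "q \<noteq> 0" for k and q :: "'a poly"
    using that by (simp add: degree_mult_eq degree_linear_power)
  have "degree M = z + degree M'" using M' M'nz dl by metis
  moreover have "degree Bp = kp + degree Rp" using Rp Rpnz dl by metis
  moreover have "degree Bm = km + degree Rm" using Rm Rmnz dl by metis
  ultimately show ?thesis using dgi unfolding z_def kp_def km_def by linarith
qed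


lemma ec_add_chord:
  fixes a2 a4 x1 y1 x2 y2 :: "'k::field"
  assumes "x1 \<noteq> x2"
  shows "ec_add a2 a4 (Some (x1, y1)) (Some (x2, y2)) =
    (let l = (y2 - y1) / (x2 - x1); x3 = l^2 - a2 - x1 - x2 in Some (x3, - (l * (x3 - x1) + y1)))"
  using assms by (simp add: ec_add_def Let_def)

lemma ec_add_Some_form:
  fixes a2 a4 x1 y1 x2 y2 :: "'k::field"
  assumes "ec_add a2 a4 (Some (x1, y1)) (Some (x2, y2)) = Some (x3, y3)"
  obtains l where "x3 = l^2 - a2 - x1 - x2" "y3 = - (l * (x3 - x1) + y1)"
    "x1 \<noteq> x2 \<Longrightarrow> l = (y2 - y1) / (x2 - x1)"
    "x1 = x2 \<Longrightarrow> l = (3 * x1 ^ 2 + 2 * a2 * x1 + a4) / (2 * y1) \<and> y1 + y2 \<noteq> 0"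
  using assms unfolding ec_add_def Let_def by (auto split: if_splits)

lemma ec_cancel:
  fixes a2 a4 x0 y0 x y :: "'k::field"
  assumes c0: "y0^2 = x0^3 + a2 * x0^2 + a4 * x0" and c: "y^2 = x^3 + a2 * x^2 + a4 * x"
  and S: "ec_add a2 a4 (Some (x0, y0)) (Some (x, y)) = Some (x3, y3)"
  and ne: "x3 \<noteq> x0"
  shows "ec_add a2 a4 (Some (x0, - y0)) (Some (x3, y3)) = Some (x, y)"
proof -
  obtain l where l: "x3 = l^2 - a2 - x0 - x" "y3 = - (l * (x3 - x0) + y0)"
    "x0 \<noteq> x \<Longrightarrow> l = (y - y0) / (x - x0)"
    "x0 = x \<Longrightarrow> l = (3 * x0 ^ 2 + 2 * a2 * x0 + a4) / (2 * y0) \<and> y0 + y \<noteq> 0"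
    using ec_add_Some_form[OF S] by blast
  have yy: "y = l * (x - x0) + y0"
  proof (cases "x0 = x")
    case True
    then have "y0 + y \<noteq> 0" using l(4) by blast
    moreover have "(y - y0) * (y + y0) = 0" using c c0 True by (simp add: algebra_simps power2_eq_square)
    ultimately have "y = y0" by (simp add: add.commute)
    then show ?thesis using True by simp
  next
    case False
    then show ?thesis using l(3) by (simp add: field_simps)
  qed
  have h1: "(y3 - (- y0)) / (x3 - x0) = - l" using ne l(2) by (simp add: field_simps)
  have h2: "(- l)^2 - a2 - x0 - x3 = x" using l(1) by simp
  have h3: "- (- l * (x - x0) + - y0) = y" using yy by simp
  have "ec_add a2 a4 (Some (x0, - y0)) (Some (x3, y3)) =
    (let l = (y3 - (- y0)) / (x3 - x0); x3' = l^2 - a2 - x0 - x3 in Some (x3', - (l * (x3' - x0) + (- y0))))"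
    using ne by (intro ec_add_chord) auto
  also have "\<dots> = Some (x, y)" by (simp only: Let_def h1 h2 h3)
  finally show ?thesis .
qed

lemma chord_curve_aux:
  fixes l x1 x2 y1 a2 a4 :: "'k::comm_ring_1"
  assumes c1: "y1^2 = x1^3 + a2*x1^2 + a4*x1"
  and K: "2*y1*l + l^2*(x2 - x1) = x2^2 + x1*x2 + x1^2 + a2*(x1+x2) + a4"
  shows "(- (l * ((l^2 - a2 - x1 - x2) - x1) + y1))^2 = (l^2 - a2 - x1 - x2)^3 + a2*(l^2 - a2 - x1 - x2)^2 + a4*(l^2 - a2 - x1 - x2)"
proof -
  define x3 where "x3 = l^2 - a2 - x1 - x2"
  have "(- (l * (x3 - x1) + y1))^2 - (x3^3 + a2*x3^2 + a4*x3) =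
    (y1^2 - (x1^3 + a2*x1^2 + a4*x1)) + (x3 - x1) * (2*y1*l + l^2*(x2 - x1) - (x2^2 + x1*x2 + x1^2 + a2*(x1+x2) + a4))"
    unfolding x3_def by (simp add: algebra_simps power2_eq_square power3_eq_cube)
  also have "\<dots> = 0" using c1 K by simp
  finally show ?thesis unfolding x3_def by simp
qed

lemma ec_add_on_curve:
  fixes a2 a4 x1 y1 x2 y2 :: "'k::field"
  assumes c1: "y1^2 = x1^3 + a2 * x1^2 + a4 * x1" and c2: "y2^2 = x2^3 + a2 * x2^2 + a4 * x2"
  and S: "ec_add a2 a4 (Some (x1, y1)) (Some (x2, y2)) = Some (x3, y3)"
  and two: "(2::'k) \<noteq> 0"
  shows "y3^2 = x3^3 + a2 * x3^2 + a4 * x3"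
proof -
  obtain l where l: "x3 = l^2 - a2 - x1 - x2" "y3 = - (l * (x3 - x1) + y1)"
    "x1 \<noteq> x2 \<Longrightarrow> l = (y2 - y1) / (x2 - x1)"
    "x1 = x2 \<Longrightarrow> l = (3 * x1 ^ 2 + 2 * a2 * x1 + a4) / (2 * y1) \<and> y1 + y2 \<noteq> 0"
    using ec_add_Some_form[OF S] by blast
  show ?thesis
  proof (cases "x1 = x2")
    case False
    have ll: "l * (x2 - x1) = y2 - y1" using l(3)[OF False] False by (simp add: field_simps)
    have y2: "y2 = y1 + l * (x2 - x1)" using ll by simp
    have "(x2 - x1) * (2 * y1 * l + l^2 * (x2 - x1)) = (y1 + l * (x2 - x1))^2 - y1^2"
      by (simp add: power2_eq_square algebra_simps)
    also have "\<dots> = (x2^3 + a2 * x2^2 + a4 * x2) - (x1^3 + a2 * x1^2 + a4 * x1)"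
      using c1 c2 y2 by simp
    also have "\<dots> = (x2 - x1) * (x2^2 + x1 * x2 + x1^2 + a2 * (x1 + x2) + a4)"
      by (simp add: power2_eq_square power3_eq_cube algebra_simps)
    finally have K: "2 * y1 * l + l^2 * (x2 - x1) = x2^2 + x1 * x2 + x1^2 + a2 * (x1 + x2) + a4"
      using False by simp
    show ?thesis unfolding l(2) l(1) using chord_curve_aux[OF c1 K] .
  next
    case True
    then have "y1 + y2 \<noteq> 0" using l(4) by blast
    moreover have "(y2 - y1) * (y2 + y1) = 0" using c1 c2 True by (simp add: algebra_simps power2_eq_square)
    ultimately have "y2 = y1" by (simp add: add.commute)
    then have y1nz: "y1 \<noteq> 0" using \<open>y1 + y2 \<noteq> 0\<close> by auto
    have ll: "l * (2 * y1) = 3 * x1 ^ 2 + 2 * a2 * x1 + a4" using l(4)[OF True] y1nz two by (simp add: field_simps)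
    have K: "2 * y1 * l + l^2 * (x2 - x1) = x2^2 + x1 * x2 + x1^2 + a2 * (x1 + x2) + a4"
      using ll True by (simp add: algebra_simps power2_eq_square)
    show ?thesis unfolding l(2) l(1) using chord_curve_aux[OF c1 K] .
  qed
qed


context
  fixes w X Y :: "'k::field"
  assumes cur: "Y^2 = X^3 + w^2 * X^2 - X"
  and xq: "X + w^2 \<noteq> 0"
begin

lemma I1: "(Y - w) * (Y + w) = (X + w^2) * (X^2 - 1)"
proof -
  have "(Y - w) * (Y + w) = Y^2 - w^2" by (simp add: algebra_simps power2_eq_square)
  also have "\<dots> = (X + w^2) * (X^2 - 1)" using cur by (simp add: algebra_simps power2_eq_square power3_eq_cube)
  finally show ?thesis .
qed

lemma I2: "((Y - w) / (X + w^2)) * ((Y + w) / (X + w^2)) = (X^2 - 1) / (X + w^2)"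
proof -
  have "((Y - w) / (X + w^2)) * ((Y + w) / (X + w^2)) = ((Y - w) * (Y + w)) / ((X + w^2) * (X + w^2))" by simp
  also have "\<dots> = ((X + w^2) * (X^2 - 1)) / ((X + w^2) * (X + w^2))" using I1 by simp
  also have "\<dots> = (X^2 - 1) / (X + w^2)" using xq by simp
  finally show ?thesis .
qed

lemma I3: "((Y - w) / (X + w^2))^2 - X = (w^2 - (1 + w^4) * X - 2 * w * Y - w^2 * X^2) / (X + w^2)^2"
proof -
  have "((Y - w) / (X + w^2))^2 - X = ((Y - w)^2 - X * (X + w^2)^2) / (X + w^2)^2"
    using xq by (simp add: field_simps)
  also have "(Y - w)^2 - X * (X + w^2)^2 = w^2 - (1 + w^4) * X - 2 * w * Y - w^2 * X^2"
  proof -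
    have "(Y - w)^2 - X * (X + w^2)^2 = Y^2 - 2*w*Y + w^2 - X * (X + w^2)^2" by (simp add: power2_eq_square algebra_simps)
    also have "\<dots> = w^2 - (1 + w^4) * X - 2 * w * Y - w^2 * X^2" unfolding cur
      by (simp add: power2_eq_square power3_eq_cube power4_eq_xxxx algebra_simps)
    finally show ?thesis .
  qed
  finally show ?thesis .
qed

lemma I3m: "((Y + w) / (X + w^2))^2 - X = (w^2 - (1 + w^4) * X + 2 * w * Y - w^2 * X^2) / (X + w^2)^2"
proof -
  have "((Y + w) / (X + w^2))^2 - X = ((Y + w)^2 - X * (X + w^2)^2) / (X + w^2)^2"
    using xq by (simp add: field_simps)
  also have "(Y + w)^2 - X * (X + w^2)^2 = w^2 - (1 + w^4) * X + 2 * w * Y - w^2 * X^2"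
  proof -
    have "(Y + w)^2 - X * (X + w^2)^2 = Y^2 + 2*w*Y + w^2 - X * (X + w^2)^2" by (simp add: power2_eq_square algebra_simps)
    also have "\<dots> = w^2 - (1 + w^4) * X + 2 * w * Y - w^2 * X^2" unfolding cur
      by (simp add: power2_eq_square power3_eq_cube power4_eq_xxxx algebra_simps)
    finally show ?thesis .
  qed
  finally show ?thesis .
qed

lemma I4: "((Y - w) / (X + w^2))^2 - X + w^2 = (w^2 - X + w^4 * X - 2 * w * Y + w^6) / (X + w^2)^2"
proof -
  have "((Y - w) / (X + w^2))^2 - X + w^2 = (w^2 - (1 + w^4) * X - 2 * w * Y - w^2 * X^2) / (X + w^2)^2 + w^2"
    using I3 by simp
  also have "\<dots> = (w^2 - (1 + w^4) * X - 2 * w * Y - w^2 * X^2 + w^2 * (X + w^2)^2) / (X + w^2)^2"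
    using xq by (simp add: field_simps)
  also have "w^2 - (1 + w^4) * X - 2 * w * Y - w^2 * X^2 + w^2 * (X + w^2)^2 = w^2 - X + w^4 * X - 2 * w * Y + w^6"
    by (simp add: power2_eq_square power4_eq_xxxx algebra_simps eval_nat_numeral)
  finally show ?thesis .
qed

lemma I5: "(((Y - w) / (X + w^2))^2 - X) + (((Y + w) / (X + w^2))^2 - X) =
   (- 2 * w^2 * X^2 - 2 * (1 + w^4) * X + 2 * w^2) / (X + w^2)^2"
proof -
  define D where "D = (X + w^2)^2"
  define n1 where "n1 = w^2 - (1 + w^4) * X - 2 * w * Y - w^2 * X^2"
  define n2 where "n2 = w^2 - (1 + w^4) * X + 2 * w * Y - w^2 * X^2"
  have "(((Y - w) / (X + w^2))^2 - X) + (((Y + w) / (X + w^2))^2 - X) = n1 / D + n2 / D"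
    using I3 I3m unfolding n1_def n2_def D_def by simp
  also have "\<dots> = (n1 + n2) / D" by (simp add: add_divide_distrib)
  also have "n1 + n2 = - 2 * w^2 * X^2 - 2 * (1 + w^4) * X + 2 * w^2"
    unfolding n1_def n2_def by (simp add: algebra_simps)
  finally show ?thesis unfolding D_def .
qed

lemma I6: "Y + w \<noteq> 0 \<Longrightarrow> (Y - w) / (X + w^2) = (X^2 - 1) / (Y + w)"
  using I1 xq by (simp add: field_simps)

end

lemma I7:
  fixes w X Y :: "'k::field"
  assumes cur: "Y^2 = X^3 + w^2 * X^2 - X"
  shows "Y^2 = X * (X * (X + w^2) - 1)"
  using cur by (simp add: algebra_simps power2_eq_square power3_eq_cube)

lemma Q_chord:
  fixes w X Y :: "'k::field"
  assumes "X + w^2 \<noteq> 0"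
  shows "ec_add (w^2) (-1) (Some (- (w^2), w)) (Some (X, Y)) =
    Some (((Y - w) / (X + w^2))^2 - X, - ((Y - w) / (X + w^2) * (((Y - w) / (X + w^2))^2 - X + w^2) + w))"
proof -
  have ne: "- (w^2) \<noteq> X" using assms by (metis add_eq_0_iff2 add.commute)
  show ?thesis using ec_add_chord[OF ne, of "w^2" "-1" w Y] by (simp add: Let_def)
qed

lemma Qm_chord:
  fixes w X Y :: "'k::field"
  assumes "X + w^2 \<noteq> 0"
  shows "\<exists>y'. ec_add (w^2) (-1) (Some (- (w^2), - w)) (Some (X, Y)) =
    Some (((Y + w) / (X + w^2))^2 - X, y')"
proof -
  have ne: "- (w^2) \<noteq> X" using assms by (metis add_eq_0_iff2 add.commute)
  show ?thesis using ec_add_chord[OF ne, of "w^2" "-1" "- w" Y] by (simp add: Let_def)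
qed


lemma ord0_Wpow[simp]: "ord0 (Wv ^ n) = int n"
  by (simp add: v0.vpow)
lemma ordi_Wpow[simp]: "ordi (Wv ^ n) = - int n"
  by (simp add: vi.vpow)

lemma two_fract: "(2::'a::field poly fract) = Fract [:2:] 1"
  using const_fract[of 2] by simp

lemma two_nz: "(2::'a::field) \<noteq> 0 \<Longrightarrow> (2::'a poly fract) \<noteq> 0"
  by (simp add: two_fract Zero_fract_def eq_fract)

lemma ord0_two: "(2::'a::field) \<noteq> 0 \<Longrightarrow> ord0 (2::'a poly fract) = 0"
  by (simp add: two_fract ord0_const)
lemma ordi_two: "(2::'a::field) \<noteq> 0 \<Longrightarrow> ordi (2::'a poly fract) = 0"
  by (simp add: two_fract ordi_const)

lemma v0_1W4: "v0.vge 0 (1 + (Wv::'a::field poly fract) ^ 4)"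
  by (rule v0.vge_add) (auto intro!: v0.vgeI simp: v0.v1)
lemma vi_1W4: "vi.vge (-4) (1 + (Wv::'a::field poly fract) ^ 4)"
  by (rule vi.vge_add) (auto intro!: vi.vgeI simp: vi.v1)

definition odd_type :: "'a::field poly fract \<Rightarrow> bool" where
  "odd_type X \<longleftrightarrow> X \<noteq> 0 \<and> 0 < ord0 X \<and> vi.vge (-1) (X + Wv^2)"

definition even_type :: "'a::field poly fract \<Rightarrow> bool" where
  "even_type X \<longleftrightarrow> X \<noteq> 0 \<and> ord0 X < 0 \<and> ordi X \<le> -3"

lemma even_to_odd:
  fixes X Y :: "'a::field poly fract"
  assumes two: "(2::'a) \<noteq> 0" and cur: "Y^2 = X^3 + Wv^2 * X^2 - X" and ev: "even_type X"
  shows "X + Wv^2 \<noteq> 0" "odd_type (((Y - Wv) / (X + Wv^2))^2 - X)"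
proof -
  have X0: "X \<noteq> 0" and o0: "ord0 X < 0" and oi: "ordi X \<le> -3" using ev by (auto simp: even_type_def)
  have "v0.vge (ord0 X + 1) (Wv^2)" by (rule v0.vgeI) (use o0 in simp)
  then have s0: "X + Wv^2 \<noteq> 0 \<and> ord0 (X + Wv^2) = ord0 X" using v0.vstrict[OF X0] by blast
  then show xq: "X + Wv^2 \<noteq> 0" by simp
  have X3: "X^3 \<noteq> 0" using X0 by simp
  have Y2: "Y^2 = X^3 + (Wv^2 * X^2 - X)" using cur by simp
  have "v0.vge (ord0 (X^3) + 1) (Wv^2 * X^2 - X)"
    using o0 X0 by (intro v0.vge_diff v0.vgeI) (simp_all add: v0.vpow v0.vmult)
  then have "Y^2 \<noteq> 0 \<and> ord0 (Y^2) = ord0 (X^3)" using v0.vstrict[OF X3] Y2 by simp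
  then have Y0: "Y \<noteq> 0" and oY: "2 * ord0 Y = 3 * ord0 X" using X0 by (auto simp: v0.vpow)
  define n1 where "n1 = Wv^2 - (1 + Wv^4) * X - 2 * Wv * Y - Wv^2 * X^2"
  have t1: "v0.vge (1 + 2 * ord0 X) (Wv^2)" using o0 by (intro v0.vgeI) simp
  have t2: "v0.vge (1 + 2 * ord0 X) ((1 + Wv^4) * X)"
    by (rule v0.vge_mono[OF v0.vge_mult[OF v0_1W4 v0.vge_self[of X]]]) (use o0 in simp)
  have t3: "v0.vge (1 + 2 * ord0 X) (2 * Wv * Y)"
  proof -
    have "v0.vge (0 + 1 + ord0 Y) (2 * Wv * Y)"
      by (intro v0.vge_mult v0.vge_self) (use two ord0_two[OF two] in \<open>auto intro!: v0.vgeI\<close>)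
    then show ?thesis by (rule v0.vge_mono) (use oY o0 in linarith)
  qed
  have t4: "v0.vge (1 + 2 * ord0 X) (Wv^2 * X^2)"
    using X0 o0 by (intro v0.vgeI) (simp add: v0.vmult v0.vpow)
  have n1v: "v0.vge (1 + 2 * ord0 X) n1" unfolding n1_def
    by (intro v0.vge_diff t1 t2 t3 t4)
  have D0: "(X + Wv^2)^2 \<noteq> 0" using xq by simp
  have oD: "ord0 ((X + Wv^2)^2) = 2 * ord0 X" using s0 by (simp add: v0.vpow)
  have eq3: "((Y - Wv) / (X + Wv^2))^2 - X = n1 / (X + Wv^2)^2"
    unfolding n1_def using I3[OF cur xq] .
  have "v0.vge (1 + 2 * ord0 X - 2 * ord0 X) (((Y - Wv) / (X + Wv^2))^2 - X)"
    unfolding eq3 using v0.vge_div[OF n1v D0] oD by simp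
  then have X'0: "v0.vge 1 (((Y - Wv) / (X + Wv^2))^2 - X)" by simp
  have "vi.vge (ordi X + 1) (Wv^2)" by (rule vi.vgeI) (use oi in simp)
  then have si: "ordi (X + Wv^2) = ordi X" using vi.vstrict[OF X0] by blast
  have "vi.vge (ordi (X^3) + 1) (Wv^2 * X^2 - X)"
    using oi X0 by (intro vi.vge_diff vi.vgeI) (simp_all add: vi.vpow vi.vmult)
  then have "ordi (Y^2) = ordi (X^3)" using vi.vstrict[OF X3] Y2 by simp
  then have oYi: "2 * ordi Y = 3 * ordi X" using X0 Y0 by (auto simp: vi.vpow)
  define n2 where "n2 = Wv^2 - X + Wv^4 * X - 2 * Wv * Y + Wv^6"
  have u1: "vi.vge (2 * ordi X - 1) (Wv^2)" using oi by (intro vi.vgeI) simp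
  have u2: "vi.vge (2 * ordi X - 1) X" using oi X0 by (intro vi.vgeI) simp
  have u3: "vi.vge (2 * ordi X - 1) (Wv^4 * X)" using oi X0 by (intro vi.vgeI) (simp add: vi.vmult)
  have u4: "vi.vge (2 * ordi X - 1) (2 * Wv * Y)"
  proof -
    have "vi.vge (0 + -1 + ordi Y) (2 * Wv * Y)"
      by (intro vi.vge_mult vi.vge_self) (use two ordi_two[OF two] in \<open>auto intro!: vi.vgeI\<close>)
    then show ?thesis by (rule vi.vge_mono) (use oYi oi in linarith)
  qed
  have u5: "vi.vge (2 * ordi X - 1) (Wv^6)" using oi by (intro vi.vgeI) simp
  have n2v: "vi.vge (2 * ordi X - 1) n2" unfolding n2_def
    by (intro vi.vge_add vi.vge_diff u1 u2 u3 u4 u5)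
  have oDi: "ordi ((X + Wv^2)^2) = 2 * ordi X" using si xq by (simp add: vi.vpow)
  have eq4: "((Y - Wv) / (X + Wv^2))^2 - X + Wv^2 = n2 / (X + Wv^2)^2"
    unfolding n2_def using I4[OF cur xq] .
  have "vi.vge (2 * ordi X - 1 - 2 * ordi X) (((Y - Wv) / (X + Wv^2))^2 - X + Wv^2)"
    unfolding eq4 using vi.vge_div[OF n2v D0] oDi by simp
  then have X'i: "vi.vge (-1) (((Y - Wv) / (X + Wv^2))^2 - X + Wv^2)" by simp
  have X'nz: "((Y - Wv) / (X + Wv^2))^2 - X \<noteq> 0"
  proof
    assume "((Y - Wv) / (X + Wv^2))^2 - X = 0"
    then have "vi.vge (-1) (Wv^2 :: 'a poly fract)" using X'i by simp
    then show False by (simp add: vi.vge_def)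
  qed
  show "odd_type (((Y - Wv) / (X + Wv^2))^2 - X)"
    unfolding odd_type_def using X'nz X'i v0.vgeD[OF X'0 X'nz] by simp
qed

lemma odd_facts:
  fixes X :: "'a::field poly fract"
  assumes od: "odd_type X"
  shows "X \<noteq> 0" "0 < ord0 X" "ordi X = -2" "vi.vge (-1) (X + Wv^2)"
proof -
  show X0: "X \<noteq> 0" and "0 < ord0 X" and g: "vi.vge (-1) (X + Wv^2)" using od by (auto simp: odd_type_def)
  have W0: "- (Wv^2) \<noteq> (0::'a poly fract)" by simp
  have "vi.vge (ordi (- (Wv^2)) + 1) (X + Wv^2)" using g by (simp add: vi.vuminus)
  then have "ordi (- (Wv^2) + (X + Wv^2)) = ordi (- (Wv^2 :: 'a poly fract))" using vi.vstrict[OF W0] by blast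
  then show "ordi X = -2" by (simp add: vi.vuminus)
qed

lemma odd_to_even:
  fixes X Y :: "'a::field poly fract"
  assumes two: "(2::'a) \<noteq> 0" and cur: "Y^2 = X^3 + Wv^2 * X^2 - X" and od: "odd_type X"
  and xq: "X + Wv^2 \<noteq> 0"
  shows "even_type (((Y - Wv) / (X + Wv^2))^2 - X)"
proof -
  have X0: "X \<noteq> 0" and o0: "0 < ord0 X" and oi: "ordi X = -2" and g: "vi.vge (-1) (X + Wv^2)"
    using odd_facts[OF od] by auto
  have m1: "(-1 :: 'a poly fract) \<noteq> 0" by simp
  have "v0.vge (ord0 (-1 :: 'a poly fract) + 1) (X^2)" using o0 X0 by (intro v0.vgeI) (simp add: v0.vpow v0.vm1)
  then have "-1 + X^2 \<noteq> 0 \<and> ord0 (-1 + X^2) = ord0 (-1 :: 'a poly fract)" using v0.vstrict[OF m1] by blast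
  then have X21: "X^2 - 1 \<noteq> 0" and oX21: "ord0 (X^2 - 1) = 0" by (simp_all add: v0.vm1)
  have Yw: "Y + Wv \<noteq> 0"
  proof
    assume "Y + Wv = 0"
    then have "(X + Wv^2) * (X^2 - 1) = 0" using I1[OF cur xq] by simp
    then show False using xq X21 by simp
  qed
  have lam: "(Y - Wv) / (X + Wv^2) = (X^2 - 1) / (Y + Wv)" using I6[OF cur xq Yw] .
  have XX: "v0.vge 1 (X * (X + Wv^2))"
  proof -
    have b: "v0.vge 1 (X + Wv^2)" using o0 X0 by (intro v0.vge_add v0.vgeI) simp_all
    have a: "v0.vge 1 X" using o0 by (intro v0.vgeI) simp
    have "v0.vge (1 + 1) (X * (X + Wv^2))" using v0.vge_mult[OF a b] .
    then show ?thesis by (rule v0.vge_mono) simp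
  qed
  have "v0.vge (ord0 (-1 :: 'a poly fract) + 1) (X * (X + Wv^2))" using XX by (simp add: v0.vm1)
  then have "-1 + X * (X + Wv^2) \<noteq> 0 \<and> ord0 (-1 + X * (X + Wv^2)) = ord0 (-1 :: 'a poly fract)"
    using v0.vstrict[OF m1] by blast
  then have F0: "X * (X + Wv^2) - 1 \<noteq> 0" "ord0 (X * (X + Wv^2) - 1) = 0" by (simp_all add: v0.vm1)
  have Y7: "Y^2 = X * (X * (X + Wv^2) - 1)" using I7[OF cur] .
  then have Y0: "Y \<noteq> 0" using X0 F0 by auto
  have "ord0 (Y^2) = ord0 (X * (X * (X + Wv^2) - 1))" using Y7 by simp
  moreover have "ord0 (Y^2) = int 2 * ord0 Y" using Y0 by (rule v0.vpow)
  moreover have "ord0 (X * (X * (X + Wv^2) - 1)) = ord0 X + ord0 (X * (X + Wv^2) - 1)"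
    using X0 F0(1) by (rule v0.vmult)
  ultimately have "int 2 * ord0 Y = ord0 X + ord0 (X * (X + Wv^2) - 1)" by simp
  then have "2 * ord0 Y = ord0 X" using F0(2) by simp
  then have oY: "1 \<le> ord0 Y" using o0 by linarith
  have "v0.vge 1 (Y + Wv)" using oY Y0 by (intro v0.vge_add v0.vgeI) simp_all
  then have oYw: "1 \<le> ord0 (Y + Wv)" using Yw by (simp add: v0.vge_def)
  have lam0: "(Y - Wv) / (X + Wv^2) \<noteq> 0" using lam X21 Yw by simp
  have olam: "ord0 ((Y - Wv) / (X + Wv^2)) \<le> -1" unfolding lam using X21 Yw oX21 oYw by (simp add: v0.vdiv)
  have L0: "((Y - Wv) / (X + Wv^2))^2 \<noteq> 0" using lam0 by simp
  have "v0.vge (ord0 (((Y - Wv) / (X + Wv^2))^2) + 1) (- X)"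
    using olam o0 X0 lam0 by (intro v0.vgeI) (simp add: v0.vpow v0.vuminus)
  then have r0: "((Y - Wv) / (X + Wv^2))^2 + - X \<noteq> 0 \<and>
      ord0 (((Y - Wv) / (X + Wv^2))^2 + - X) = ord0 (((Y - Wv) / (X + Wv^2))^2)"
    using v0.vstrict[OF L0] by blast
  have X2: "X^2 \<noteq> 0" using X0 by simp
  have "vi.vge (ordi (X^2) + 1) (-1 :: 'a poly fract)" using oi X0 by (intro vi.vgeI) (simp add: vi.vpow vi.vm1)
  then have "ordi (X^2 + -1) = ordi (X^2)" using vi.vstrict[OF X2] by blast
  then have oiX21: "ordi (X^2 - 1) = -4" using oi X0 by (simp add: vi.vpow)
  have "vi.vge (-2) X" using oi by (intro vi.vgeI) simp
  then have "vi.vge (-2 + -1) (X * (X + Wv^2))" using g by (rule vi.vge_mult)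
  then have "vi.vge (-3) (X * (X + Wv^2) - 1)" by (intro vi.vge_diff) (auto intro!: vi.vgeI simp: vi.v1)
  then have "vi.vge (-2 + -3) (Y^2)" unfolding Y7 using \<open>vi.vge (-2) X\<close> by (intro vi.vge_mult)
  then have "-5 \<le> 2 * ordi Y" using Y0 by (simp add: vi.vge_def vi.vpow)
  then have oYi: "-2 \<le> ordi Y" by linarith
  have "vi.vge (-2) (Y + Wv)" using oYi Y0 by (intro vi.vge_add vi.vgeI) simp_all
  then have oYwi: "-2 \<le> ordi (Y + Wv)" using Yw by (simp add: vi.vge_def)
  have olami: "ordi ((Y - Wv) / (X + Wv^2)) \<le> -2" unfolding lam using X21 Yw oiX21 oYwi by (simp add: vi.vdiv)
  have "vi.vge (ordi (((Y - Wv) / (X + Wv^2))^2) + 1) (- X)"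
    using olami oi X0 lam0 by (intro vi.vgeI) (simp add: vi.vpow vi.vuminus)
  then have ri: "ordi (((Y - Wv) / (X + Wv^2))^2 + - X) = ordi (((Y - Wv) / (X + Wv^2))^2)"
    using vi.vstrict[OF L0] by blast
  show ?thesis unfolding even_type_def
    using r0 ri olam olami lam0 by (simp add: v0.vpow vi.vpow)
qed


lemma Fract_add1: "Fract (p + q) 1 = Fract p 1 + (Fract q 1 :: 'a::idom fract)" by simp
lemma Fract_mult1: "Fract (p * q) 1 = Fract p 1 * (Fract q 1 :: 'a::idom fract)" by simp
lemma Fract_minus1: "Fract (- p) 1 = - (Fract p 1 :: 'a::idom fract)" by simp
lemma Fract_diff1: "Fract (p - q) 1 = Fract p 1 - (Fract q 1 :: 'a::idom fract)" by simp
lemma Fract_pow1: "Fract (p ^ n) 1 = (Fract p 1 :: 'a::idom fract) ^ n"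
proof (induction n)
  case 0 then show ?case by (simp add: One_fract_def)
next
  case (Suc n)
  have "Fract (p ^ Suc n) 1 = Fract p 1 * (Fract (p ^ n) 1 :: 'a fract)" by simp
  then show ?case using Suc by simp
qed
lemma Fract_one1: "Fract 1 1 = (1 :: 'a::idom fract)" by (simp add: One_fract_def)
lemma Fract_num1: "Fract (numeral k) 1 = (numeral k :: 'a::idom fract)"
proof -
  have "Fract (of_nat (numeral k)) 1 = (of_nat (numeral k) :: 'a fract)" by (rule Fract_of_nat_eq)
  then show ?thesis by simp
qed
lemma Fract_div1: "b \<noteq> 0 \<Longrightarrow> Fract a b = Fract a 1 / (Fract b 1 :: 'a::idom fract)" by simp

lemmas Fract_hom1 = Fract_add1 Fract_mult1 Fract_minus1 Fract_diff1 Fract_pow1 Fract_one1 Fract_num1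

lemma Wv_Fract: "Wv = Fract pX 1" by (simp add: Wv_def)

lemma coprime_order0:
  fixes a b :: "'a::field poly"
  assumes "coprime a b"
  shows "order 0 a = 0 \<or> order 0 b = 0"
proof (rule ccontr)
  assume "\<not> ?thesis"
  then have "pX dvd a" "pX dvd b" using order_divides[of 0 1] by (auto simp: Suc_le_eq)
  then have "is_unit (pX :: 'a poly)" using assms coprime_common_divisor by blast
  then show False using pX_not_unit by blast
qed

lemma odd_X21:
  fixes X :: "'a::field poly fract"
  assumes od: "odd_type X"
  shows "X^2 - 1 \<noteq> 0" "ord0 (X^2 - 1) = 0" "ordi (X^2 - 1) = -4"
proof -
  have X0: "X \<noteq> 0" and o0: "0 < ord0 X" and oi: "ordi X = -2"
    using odd_facts[OF od] by auto
  have m1: "(-1 :: 'a poly fract) \<noteq> 0" by simp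
  have "v0.vge (ord0 (-1 :: 'a poly fract) + 1) (X^2)" using o0 X0 by (intro v0.vgeI) (simp add: v0.vpow v0.vm1)
  then have "-1 + X^2 \<noteq> 0 \<and> ord0 (-1 + X^2) = ord0 (-1 :: 'a poly fract)" using v0.vstrict[OF m1] by blast
  then show "X^2 - 1 \<noteq> 0" "ord0 (X^2 - 1) = 0" by (simp_all add: v0.vm1)
  have X2: "X^2 \<noteq> 0" using X0 by simp
  have "vi.vge (ordi (X^2) + 1) (-1 :: 'a poly fract)" using oi X0 by (intro vi.vgeI) (simp add: vi.vpow vi.vm1)
  then have "ordi (X^2 + -1) = ordi (X^2)" using vi.vstrict[OF X2] by blast
  then show "ordi (X^2 - 1) = -4" using oi X0 by (simp add: vi.vpow)
qed

lemma kappa_bound: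
  fixes X l :: "'a::field poly fract" and Ap Bp :: "'a poly"
  assumes o0: "0 < ord0 X" and X0: "X \<noteq> 0" and l0: "l \<noteq> 0"
  and rep: "l^2 - X = Fract Ap Bp" "Bp \<noteq> 0" "coprime Ap Bp"
  shows "- 2 * ord0 l \<le> int (order 0 Bp)"
proof (cases "ord0 l < 0")
  case True
  have L0: "l^2 \<noteq> 0" using l0 by simp
  have "v0.vge (ord0 (l^2) + 1) (- X)" using True o0 X0 l0 by (intro v0.vgeI) (simp add: v0.vpow v0.vuminus)
  then have r: "l^2 + - X \<noteq> 0 \<and> ord0 (l^2 + - X) = ord0 (l^2)" using v0.vstrict[OF L0] by blast
  then have Ap0: "Ap \<noteq> 0" using rep by (auto simp: fract_collapse)
  have "int (order 0 Bp) = max 0 (- ord0 (Fract Ap Bp))" using rep_order[OF rep(2,3) Ap0] .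
  then show ?thesis using r rep(1) l0 by (simp add: v0.vpow)
qed simp

lemma pi_bound:
  fixes X l :: "'a::field poly fract" and Ap Bp :: "'a poly"
  assumes oi: "ordi X = -2" and X0: "X \<noteq> 0" and l0: "l \<noteq> 0"
  and rep: "l^2 - X = Fract Ap Bp" "Bp \<noteq> 0" "coprime Ap Bp"
  shows "int (degree Bp) - 2 * ordi l - 2 \<le> int (dg (l^2 - X))"
proof (cases "ordi l \<le> -2")
  case True
  have L0: "l^2 \<noteq> 0" using l0 by simp
  have "vi.vge (ordi (l^2) + 1) (- X)" using True oi X0 l0 by (intro vi.vgeI) (simp add: vi.vpow vi.vuminus)
  then have r: "l^2 + - X \<noteq> 0 \<and> ordi (l^2 + - X) = ordi (l^2)" using vi.vstrict[OF L0] by blast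
  then have Ap0: "Ap \<noteq> 0" using rep by (auto simp: fract_collapse)
  have "int (dg (Fract Ap Bp)) = int (degree Bp) + max 0 (- ordi (Fract Ap Bp))" using rep_dg[OF rep(2,3) Ap0] .
  then show ?thesis using r rep(1) l0 by (simp add: vi.vpow)
next
  case False
  have "dg (l^2 - X) = max (degree Ap) (degree Bp)" using rep dg_rep by simp
  then show ?thesis using False by simp
qed


lemma ratio_aux:
  fixes a b w :: "'k::field"
  assumes b0: "b \<noteq> 0"
  shows "(- 2 * w^2 * (a/b)^2 - 2 * (1 + w^4) * (a/b) + 2 * w^2) / (a/b + w^2)^2 =
    (- 2 * w^2 * a^2 - 2 * (1 + w^4) * a * b + 2 * w^2 * b^2) / (a + w^2 * b)^2"
proof -
  have n: "- 2 * w^2 * (a/b)^2 - 2 * (1 + w^4) * (a/b) + 2 * w^2 =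
    (- 2 * w^2 * a^2 - 2 * (1 + w^4) * a * b + 2 * w^2 * b^2) / b^2"
    using b0 by (simp add: field_simps power2_eq_square)
  have d: "(a/b + w^2)^2 = (a + w^2 * b)^2 / b^2"
    using b0 by (simp add: field_simps power2_eq_square)
  show ?thesis unfolding n d using b0 by simp
qed

lemma grow:
  fixes X Y :: "'a::field poly fract"
  assumes two: "(2::'a) \<noteq> 0" and cur: "Y^2 = X^3 + Wv^2 * X^2 - X"
  and xq: "X + Wv^2 \<noteq> 0" and ty: "odd_type X \<or> even_type X"
  shows "2 * dg X \<le> dg (((Y - Wv) / (X + Wv^2))^2 - X) + dg (((Y + Wv) / (X + Wv^2))^2 - X)"
proof -
  define lam where "lam = (Y - Wv) / (X + Wv^2)"
  define mu where "mu = (Y + Wv) / (X + Wv^2)"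
  have X0: "X \<noteq> 0" using ty by (auto simp: odd_type_def even_type_def)
  obtain A B where AB: "B \<noteq> 0" "coprime A B" "X = Fract A B" by (rule coprime_rep)
  obtain Ap Bp where ABp: "Bp \<noteq> 0" "coprime Ap Bp" "lam^2 - X = Fract Ap Bp" by (rule coprime_rep)
  obtain Am Bm where ABm: "Bm \<noteq> 0" "coprime Am Bm" "mu^2 - X = Fract Am Bm" by (rule coprime_rep)
  have A0: "A \<noteq> 0" using X0 AB by (auto simp: fract_collapse)
  define M where "M = A + pX^2 * B"
  define N where "N = - 2 * pX^2 * A^2 - 2 * (1 + pX^4) * A * B + 2 * pX^2 * B^2"
  define a where "a = (Fract A 1 :: 'a poly fract)"
  define b where "b = (Fract B 1 :: 'a poly fract)"
  have b0: "b \<noteq> 0" using AB(1) by (simp add: b_def Zero_fract_def eq_fract)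
  have Xab: "X = a / b" using AB by (simp add: a_def b_def)
  have XM: "X + Wv^2 = Fract M B" using AB by (simp add: M_def Wv_Fract flip: Fract_pow1)
  then have M0: "M \<noteq> 0" using xq by (auto simp: fract_collapse)
  have eM: "Fract M 1 = a + Wv^2 * b" by (simp add: M_def a_def b_def Wv_Fract Fract_hom1)
  have eN: "Fract N 1 = - 2 * Wv^2 * a^2 - 2 * (1 + Wv^4) * a * b + 2 * Wv^2 * b^2"
    by (simp add: N_def a_def b_def Wv_Fract Fract_hom1)
  have eM0: "a + Wv^2 * b \<noteq> 0" using eM M0 by (simp add: Zero_fract_def eq_fract flip: eM)
  have "(lam^2 - X) + (mu^2 - X) = (- 2 * Wv^2 * X^2 - 2 * (1 + Wv^4) * X + 2 * Wv^2) / (X + Wv^2)^2"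
    unfolding lam_def mu_def by (rule I5[OF cur xq])
  also have "\<dots> = (- 2 * Wv^2 * a^2 - 2 * (1 + Wv^4) * a * b + 2 * Wv^2 * b^2) / (a + Wv^2 * b)^2"
    unfolding Xab using b0 by (rule ratio_aux)
  also have "\<dots> = Fract N (M^2)"
    using M0 by (simp add: Fract_div1[of "M^2" N] Fract_pow1 eM eN)
  finally have sumeq: "Fract Ap Bp + Fract Am Bm = Fract N (M^2)" using ABp ABm by simp
  have eq: "(Ap * Bm + Am * Bp) * M^2 = N * (Bp * Bm)"
    using sumeq ABp(1) ABm(1) M0 by (simp add: eq_fract)
  have KP: "2 * degree M + order 0 Bp + order 0 Bm \<le> degree Bp + degree Bm + 2 * order 0 M"
    by (rule key_poly[OF two AB(2) ABp(1) ABm(1) M_def M0 N_def eq])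
  have dgX: "dg X = max (degree A) (degree B)" using AB dg_rep by simp
  have dgp: "dg (lam^2 - X) = max (degree Ap) (degree Bp)" using ABp dg_rep by simp
  have dgm: "dg (mu^2 - X) = max (degree Am) (degree Bm)" using ABm dg_rep by simp
  from ty show ?thesis
  proof
    assume ev: "even_type X"
    then have o0: "ord0 X < 0" and oi: "ordi X \<le> -3" by (auto simp: even_type_def)
    have "int (order 0 A) - int (order 0 B) < 0" using o0 AB A0 by (simp add: ord0_Fract)
    then have oA: "order 0 A = 0" using coprime_order0[OF AB(2)] by auto
    then have "poly A 0 \<noteq> 0" using A0 order_root by blast
    then have "poly M 0 \<noteq> 0" by (simp add: M_def)
    then have oM: "order 0 M = 0" by (rule order_0I)
    have "int (degree B) - int (degree A) \<le> -3" using oi AB A0 by (simp add: ordi_Fract)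
    then have "degree (pX^2 * B) < degree A" using AB(1) by (simp add: degree_mult_eq degree_linear_power)
    then have dM: "degree M = degree A" unfolding M_def by (rule degree_add_eq_left)
    have "dg X = degree A" using dgX \<open>int (degree B) - int (degree A) \<le> -3\<close> by simp
    then show ?thesis using KP oM dM dgp dgm unfolding lam_def[symmetric] mu_def[symmetric] by linarith
  next
    assume od: "odd_type X"
    have o0: "0 < ord0 X" and oi: "ordi X = -2" using odd_facts[OF od] by auto
    have "0 < int (order 0 A) - int (order 0 B)" using o0 AB A0 by (simp add: ord0_Fract)
    then have oB: "order 0 B = 0" using coprime_order0[OF AB(2)] by auto
    have dAB: "int (degree B) - int (degree A) = -2" using oi AB A0 by (simp add: ordi_Fract)
    have dgX': "int (dg X) = int (degree B) + 2" using dgX dAB by simp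
    have z0: "ord0 (X + Wv^2) = int (order 0 M)" using XM M0 AB(1) oB by (simp add: ord0_Fract)
    have einf: "ordi (X + Wv^2) = int (degree B) - int (degree M)" using XM M0 AB(1) by (simp add: ordi_Fract)
    have X21: "X^2 - 1 \<noteq> 0" "ord0 (X^2 - 1) = 0" "ordi (X^2 - 1) = -4" using odd_X21[OF od] by auto
    have lm: "lam * mu = (X^2 - 1) / (X + Wv^2)" unfolding lam_def mu_def by (rule I2[OF cur xq])
    then have lm0: "lam * mu \<noteq> 0" using X21 xq by simp
    then have l0: "lam \<noteq> 0" and m0: "mu \<noteq> 0" by auto
    have s0: "ord0 lam + ord0 mu = - int (order 0 M)"
    proof -
      have "ord0 (lam * mu) = ord0 (X^2 - 1) - ord0 (X + Wv^2)" unfolding lm using X21 xq by (simp add: v0.vdiv)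
      then show ?thesis using l0 m0 X21 z0 by (simp add: v0.vmult)
    qed
    have si: "ordi lam + ordi mu = -4 - (int (degree B) - int (degree M))"
    proof -
      have "ordi (lam * mu) = ordi (X^2 - 1) - ordi (X + Wv^2)" unfolding lm using X21 xq by (simp add: vi.vdiv)
      then show ?thesis using l0 m0 X21 einf by (simp add: vi.vmult)
    qed
    have kp: "- 2 * ord0 lam \<le> int (order 0 Bp)" by (rule kappa_bound[OF o0 X0 l0 ABp(3,1,2)])
    have km: "- 2 * ord0 mu \<le> int (order 0 Bm)" by (rule kappa_bound[OF o0 X0 m0 ABm(3,1,2)])
    have pp: "int (degree Bp) - 2 * ordi lam - 2 \<le> int (dg (lam^2 - X))" by (rule pi_bound[OF oi X0 l0 ABp(3,1,2)])
    have pm: "int (degree Bm) - 2 * ordi mu - 2 \<le> int (dg (mu^2 - X))" by (rule pi_bound[OF oi X0 m0 ABm(3,1,2)])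
    have KPi: "2 * int (degree M) + int (order 0 Bp) + int (order 0 Bm) \<le> int (degree Bp) + int (degree Bm) + 2 * int (order 0 M)"
      using KP by linarith
    have "2 * int (dg X) \<le> int (dg (lam^2 - X)) + int (dg (mu^2 - X))"
      using dgX' s0 si kp km pp pm KPi by linarith
    then show ?thesis unfolding lam_def mu_def by linarith
  qed
qed


abbreviation QQ :: "'a::field poly fract ec_point" where
  "QQ \<equiv> Some (- (Wv^2), Wv)"

abbreviation PP :: "nat \<Rightarrow> 'a::field poly fract ec_point" where
  "PP n \<equiv> ec_mult (Wv^2) (-1) n QQ"

lemma curv_conv: "(Y^2 = X^3 + w^2 * X^2 + -1 * X) \<longleftrightarrow> (Y^2 = X^3 + w^2 * X^2 - (X::'k::field))"
  by simp

lemma QQ_curve: "Wv^2 = (- (Wv^2))^3 + Wv^2 * (- (Wv^2))^2 - (- (Wv^2 :: 'a::field poly fract))"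
  by (simp add: power2_eq_square power3_eq_cube)

lemma dg_Q: "dg (- (Wv^2) :: 'a::field poly fract) = 2"
proof -
  have "- (Wv^2) = Fract (- (pX^2)) (1 :: 'a poly)" by (simp add: Wv_Fract Fract_hom1)
  moreover have "coprime (- (pX^2)) (1 :: 'a poly)" by simp
  ultimately show ?thesis by (simp add: dg_rep degree_linear_power)
qed

lemma double_aux:
  fixes w :: "'k::field"
  assumes "w \<noteq> 0" "(2::'k) \<noteq> 0"
  shows "((w^4 - 1) / (2 * w))^2 + w^2 = (w^4 + 1)^2 / (4 * w^2)"
proof -
  have four: "(4::'k) \<noteq> 0" using assms(2) by (metis mult_2 mult_eq_0_iff numeral_Bit0 one_add_one)
  have "((w^4 - 1) / (2 * w))^2 = (w^4 - 1)^2 / (4 * w^2)" by (simp add: power2_eq_square)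
  moreover have "w^2 = (4 * w^4) / (4 * w^2)" using assms four by (simp add: power2_eq_square power4_eq_xxxx)
  ultimately have "((w^4 - 1) / (2 * w))^2 + w^2 = ((w^4 - 1)^2 + 4 * w^4) / (4 * w^2)"
    by (simp add: add_divide_distrib)
  also have "(w^4 - 1)^2 + 4 * w^4 = (w^4 + 1)^2" by (simp add: power2_eq_square algebra_simps)
  finally show ?thesis .
qed

lemma P1: "PP 1 = (QQ :: 'a::field poly fract ec_point)"
  by (simp add: ec_add_def)

lemma ec_add_double:
  fixes a2 a4 x1 y1 :: "'k::field"
  assumes "y1 + y1 \<noteq> 0"
  shows "ec_add a2 a4 (Some (x1, y1)) (Some (x1, y1)) =
    (let l = (3 * x1 ^ 2 + 2 * a2 * x1 + a4) / (2 * y1); x3 = l^2 - a2 - x1 - x1 in Some (x3, - (l * (x3 - x1) + y1)))"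
  using assms by (simp add: ec_add_def Let_def)

lemma P2:
  assumes two: "(2::'a::field) \<noteq> 0"
  obtains Y2 where "PP 2 = Some ((Wv^4 + 1)^2 / (4 * Wv^2), Y2 :: 'a poly fract)"
proof -
  have t2: "(2::'a poly fract) \<noteq> 0" using two_nz[OF two] .
  have ww: "Wv + Wv \<noteq> (0::'a poly fract)" using t2 by (metis Wv_nz mult_2 mult_eq_0_iff)
  have e2: "(PP 2 :: 'a poly fract ec_point) = ec_add (Wv^2) (-1) QQ QQ"
  proof -
    have "(PP 2 :: 'a poly fract ec_point) = ec_add (Wv^2) (-1) QQ (PP 1)" by (simp only: numeral_2_eq_2 ec_mult.simps One_nat_def)
    then show ?thesis by (simp only: P1)
  qed
  have l: "(3 * (- (Wv^2)) ^ 2 + 2 * Wv^2 * (- (Wv^2)) + -1) / (2 * Wv) = (Wv^4 - 1) / (2 * (Wv :: 'a poly fract))"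
    by (simp add: power2_eq_square power4_eq_xxxx algebra_simps)
  have x: "((Wv^4 - 1) / (2 * Wv))^2 - Wv^2 - (- (Wv^2)) - (- (Wv^2)) = (Wv^4 + 1)^2 / (4 * (Wv :: 'a poly fract)^2)"
    using double_aux[OF Wv_nz t2] by simp
  define l0 where "l0 = (3 * (- (Wv^2)) ^ 2 + 2 * Wv^2 * (- (Wv^2)) + -1) / (2 * (Wv :: 'a poly fract))"
  define x0 where "x0 = l0^2 - Wv^2 - (- (Wv^2)) - (- (Wv^2))"
  have h: "ec_add (Wv^2) (-1) QQ QQ = Some (x0, - (l0 * (x0 - (- (Wv^2))) + Wv))"
    using ww unfolding ec_add_def Let_def l0_def x0_def by simp
  have "x0 = (Wv^4 + 1)^2 / (4 * Wv^2)" unfolding x0_def l0_def l x ..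
  then have "\<exists>Y2. ec_add (Wv^2) (-1) QQ QQ = Some ((Wv^4 + 1)^2 / (4 * Wv^2), Y2 :: 'a poly fract)"
    using h by blast
  then show ?thesis using that e2 by auto
qed

lemma X2_facts:
  assumes two: "(2::'a::field) \<noteq> 0"
  shows "dg ((Wv^4 + 1)^2 / (4 * Wv^2) :: 'a poly fract) = 8"
    "even_type ((Wv^4 + 1)^2 / (4 * Wv^2) :: 'a poly fract)"
proof -
  have four: "(4::'a) \<noteq> 0" using two by (metis mult_2 mult_eq_0_iff numeral_Bit0 one_add_one)
  define A where "A = (pX^4 + 1 :: 'a poly)^2"
  define B where "B = (4 * pX^2 :: 'a poly)"
  have p0: "poly (pX^4 + 1 :: 'a poly) 0 \<noteq> 0" by simp
  have nd: "\<not> pX dvd (pX^4 + 1 :: 'a poly)"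
    using p0 dvd_iff_poly_eq_0[of 0 "pX^4 + 1 :: 'a poly"] by simp
  have c1: "coprime (pX^4 + 1 :: 'a poly) pX" using coprime_pX[OF nd] .
  have u4: "is_unit (4 :: 'a poly)" using four by (simp add: is_unit_poly_iff numeral_poly)
  have c4: "coprime (pX^4 + 1 :: 'a poly) 4" using u4 by (meson coprimeI dvd_unit_imp_unit)
  have cAB: "coprime A B" unfolding A_def B_def
    by (rule coprime_pow1, rule coprime_mult2[OF c4 coprime_pow2[OF c1]])
  have B0: "B \<noteq> 0" using four unfolding B_def by (simp add: numeral_poly)
  have d4: "degree (pX^4 + 1 :: 'a poly) = 4" by (subst degree_add_eq_left) (simp_all add: degree_linear_power)
  have pn: "(pX^4 + 1 :: 'a poly) \<noteq> 0" using p0 by (metis poly_0)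
  have dA: "degree A = 8" unfolding A_def using d4 degree_power_eq[OF pn, of 2] by simp
  have dB: "degree B = 2" unfolding B_def using four by (simp add: degree_mult_eq degree_linear_power numeral_poly)
  have e1: "Fract A B = Fract A 1 / (Fract B 1 :: 'a poly fract)" using B0 by (rule Fract_div1)
  have e2: "Fract A 1 = ((Wv^4 + 1)^2 :: 'a poly fract)" by (simp add: A_def Wv_Fract Fract_hom1)
  have e3: "Fract B 1 = (4 * Wv^2 :: 'a poly fract)" by (simp add: B_def Wv_Fract Fract_hom1)
  have eq: "(Wv^4 + 1)^2 / (4 * Wv^2) = (Fract A B :: 'a poly fract)" unfolding e1 e2 e3 ..
  show "dg ((Wv^4 + 1)^2 / (4 * Wv^2) :: 'a poly fract) = 8" unfolding eq using dg_rep[OF B0 cAB] dA dB by simp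
  have one0: "(1 :: 'a poly fract) \<noteq> 0" by simp
  have "v0.vge (ord0 (1 :: 'a poly fract) + 1) (Wv^4)" by (intro v0.vgeI) (simp add: v0.v1)
  then have a0: "1 + Wv^4 \<noteq> (0::'a poly fract)" "ord0 (1 + Wv^4 :: 'a poly fract) = 0"
    using v0.vstrict[OF one0] by (auto simp: v0.v1)
  have W4: "(Wv^4 :: 'a poly fract) \<noteq> 0" by simp
  have "vi.vge (ordi (Wv^4 :: 'a poly fract) + 1) 1" by (intro vi.vgeI) (simp add: vi.v1)
  then have ai: "ordi (Wv^4 + 1 :: 'a poly fract) = -4" using vi.vstrict[OF W4, of 1] by auto
  have t2: "(2 :: 'a poly fract) \<noteq> 0" using two_nz[OF two] .
  have f4: "(4 :: 'a poly fract) = 2 * 2" by simp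
  note m0 = v0.vmult[OF t2 t2]
  note mi = vi.vmult[OF t2 t2]
  have "ord0 (4 :: 'a poly fract) = ord0 ((2::'a poly fract) * 2)" "ordi (4 :: 'a poly fract) = ordi ((2::'a poly fract) * 2)"
    by simp_all
  then have o4: "ord0 (4 :: 'a poly fract) = 0" "ordi (4 :: 'a poly fract) = 0"
    using m0 mi ord0_two[OF two] ordi_two[OF two] by simp_all
  have n4: "(4 :: 'a poly fract) \<noteq> 0" using t2 f4 by (metis mult_eq_0_iff)
  have an: "Wv^4 + 1 \<noteq> (0::'a poly fract)" using a0 by (simp add: add.commute)
  have X0: "(Wv^4 + 1)^2 / (4 * Wv^2) \<noteq> (0 :: 'a poly fract)" using an n4 by simp
  have "ord0 ((Wv^4 + 1)^2 / (4 * Wv^2) :: 'a poly fract) = -2"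
    using an n4 a0 o4 by (simp add: v0.vdiv v0.vmult v0.vpow add.commute)
  moreover have "ordi ((Wv^4 + 1)^2 / (4 * Wv^2) :: 'a poly fract) = -6"
    using an n4 ai o4 by (simp add: vi.vdiv vi.vmult vi.vpow)
  ultimately show "even_type ((Wv^4 + 1)^2 / (4 * Wv^2) :: 'a poly fract)"
    unfolding even_type_def using X0 by simp
qed


definition Inv :: "nat \<Rightarrow> 'a::field itself \<Rightarrow> bool" where
  "Inv n TY \<longleftrightarrow> (\<exists>X Y (X' :: 'a poly fract) Y'. (PP n :: 'a poly fract ec_point) = Some (X, Y) \<and> PP (n - 1) = Some (X', Y') \<and>
     Y^2 = X^3 + Wv^2 * X^2 - X \<and> Y'^2 = X'^3 + Wv^2 * X'^2 - X' \<and>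
     (if even n then even_type X else odd_type X) \<and> dg X' + 6 \<le> dg X \<and> 2 \<le> dg X')"

lemma QQc: "Wv^2 = (- (Wv^2))^3 + Wv^2 * (- (Wv^2))^2 + -1 * (- (Wv^2 :: 'a::field poly fract))"
  by (simp add: power2_eq_square power3_eq_cube)

lemma Inv2:
  assumes two: "(2::'a::field) \<noteq> 0"
  shows "Inv 2 TYPE('a)"
proof -
  obtain Y2 where P2: "PP 2 = Some ((Wv^4 + 1)^2 / (4 * Wv^2), Y2 :: 'a poly fract)" using P2[OF two] by blast
  have "PP 2 = ec_add (Wv^2) (-1) QQ (QQ :: 'a poly fract ec_point)"
  proof -
    have "(PP 2 :: 'a poly fract ec_point) = ec_add (Wv^2) (-1) QQ (PP 1)" by (simp only: numeral_2_eq_2 ec_mult.simps One_nat_def)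
    then show ?thesis by (simp only: P1)
  qed
  then have S: "ec_add (Wv^2) (-1) QQ QQ = Some ((Wv^4 + 1)^2 / (4 * Wv^2), Y2 :: 'a poly fract)" using P2 by simp
  have c: "Y2^2 = ((Wv^4 + 1)^2 / (4 * Wv^2))^3 + Wv^2 * ((Wv^4 + 1)^2 / (4 * Wv^2))^2 + -1 * ((Wv^4 + 1)^2 / (4 * Wv^2))"
    by (rule ec_add_on_curve[OF QQc QQc S two_nz[OF two]])
  have "PP (2 - 1) = (QQ :: 'a poly fract ec_point)" using P1 by simp
  moreover have "dg (- (Wv^2) :: 'a poly fract) = 2" by (rule dg_Q)
  ultimately show ?thesis unfolding Inv_def using P2 c X2_facts[OF two]
    by (intro exI[of _ "(Wv^4 + 1)^2 / (4 * Wv^2)"] exI[of _ Y2] exI[of _ "- (Wv^2)"] exI[of _ Wv])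
       (simp add: power2_eq_square power3_eq_cube)
qed

lemma Inv_step:
  assumes two: "(2::'a::field) \<noteq> 0" and n2: "2 \<le> n" and I: "Inv n TYPE('a)"
  shows "Inv (Suc n) TYPE('a)"
proof -
  obtain X Y X' Y' :: "'a poly fract" where h: "(PP n :: 'a poly fract ec_point) = Some (X, Y)" "PP (n - 1) = Some (X', Y')"
    "Y^2 = X^3 + Wv^2 * X^2 - X" "Y'^2 = X'^3 + Wv^2 * X'^2 - X'"
    "if even n then even_type X else odd_type X" "dg X' + 6 \<le> dg X" "2 \<le> dg X'"
    using I unfolding Inv_def by blast
  have xq: "X + Wv^2 \<noteq> 0"
  proof
    assume "X + Wv^2 = 0"
    then have "X = - (Wv^2)" by (simp add: add_eq_0_iff)
    then have "dg X = 2" using dg_Q by simp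
    then show False using h(6,7) by simp
  qed
  have ne: "X \<noteq> - (Wv^2)" using xq by (metis add_eq_0_iff2 add.commute)
  define lam where "lam = (Y - Wv) / (X + Wv^2)"
  define mu where "mu = (Y + Wv) / (X + Wv^2)"
  define Xp where "Xp = lam^2 - X"
  define Yp where "Yp = - (lam * (lam^2 - X + Wv^2) + Wv)"
  have Pn1: "PP (Suc n) = Some (Xp, Yp)"
    using Q_chord[OF xq, of Y] h(1) unfolding Xp_def Yp_def lam_def by simp
  have n1: "Suc (n - 1) = n" using n2 by simp
  have S: "ec_add (Wv^2) (-1) QQ (Some (X', Y')) = Some (X, Y)"
    using h(1,2) n1 by (metis ec_mult.simps(2))
  have c': "Y'^2 = X'^3 + Wv^2 * X'^2 + -1 * X'" using h(4) by simp
  have canc: "ec_add (Wv^2) (-1) (Some (- (Wv^2), - Wv)) (Some (X, Y)) = Some (X', Y')"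
    by (rule ec_cancel[OF QQc c' S ne])
  obtain y' where "ec_add (Wv^2) (-1) (Some (- (Wv^2), - Wv)) (Some (X, Y)) = Some (mu^2 - X, y')"
    using Qm_chord[OF xq, of Y] unfolding mu_def by blast
  then have X'eq: "X' = mu^2 - X" using canc by simp
  have ty: "odd_type X \<or> even_type X" using h(5) by (auto split: if_splits)
  have gr: "2 * dg X \<le> dg Xp + dg X'"
    using grow[OF two h(3) xq ty] unfolding Xp_def X'eq lam_def mu_def .
  have c: "Y^2 = X^3 + Wv^2 * X^2 + -1 * X" using h(3) by simp
  have Sp: "ec_add (Wv^2) (-1) QQ (Some (X, Y)) = Some (Xp, Yp)" using Pn1 h(1) by simp
  have cp: "Yp^2 = Xp^3 + Wv^2 * Xp^2 + -1 * Xp" by (rule ec_add_on_curve[OF QQc c Sp two_nz[OF two]])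
  have typ': "if even (Suc n) then even_type Xp else odd_type Xp"
  proof (cases "even n")
    case True
    then have "even_type X" using h(5) by simp
    then have "odd_type Xp" unfolding Xp_def lam_def using even_to_odd(2)[OF two h(3)] by blast
    then show ?thesis using True by simp
  next
    case False
    then have "odd_type X" using h(5) by simp
    then have "even_type Xp" unfolding Xp_def lam_def using odd_to_even[OF two h(3) _ xq] by blast
    then show ?thesis using False by simp
  qed
  show ?thesis unfolding Inv_def
    apply (rule exI[of _ Xp], rule exI[of _ Yp], rule exI[of _ X], rule exI[of _ Y])
    using Pn1 h(1,3,6,7) cp typ' gr by simp
qed

lemma core:
  assumes two: "(2::'a::field) \<noteq> 0" and n: "0 < n"
  shows "(PP n :: 'a poly fract ec_point) \<noteq> None"
proof (cases "n = 1")
  case True then show ?thesis by (simp add: ec_add_def)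
next
  case False
  then have n2: "2 \<le> n" using n by simp
  have "Inv n TYPE('a)" using n2
  proof (induction n rule: dec_induct)
    case base then show ?case by (rule Inv2[OF two])
  next
    case (step m) then show ?case using Inv_step[OF two] by blast
  qed
  then show ?thesis unfolding Inv_def by auto
qed


definition sc :: "'k::field \<Rightarrow> 'k ec_point \<Rightarrow> 'k ec_point" where
  "sc u P = map_option (\<lambda>(x, y). (u^2 * x, u^3 * y)) P"

lemma sc_simps[simp]: "sc u None = None" "sc u (Some (x, y)) = Some (u^2 * x, u^3 * y)"
  by (simp_all add: sc_def)

lemma ec_add_scale:
  fixes u a2 a4 :: "'k::field"
  assumes u: "u \<noteq> 0"
  shows "ec_add (u^2 * a2) (u^4 * a4) (sc u P) (sc u R) = sc u (ec_add a2 a4 P R)"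
proof (cases P)
  case None then show ?thesis by (simp add: ec_add_def)
next
  case (Some p)
  obtain x1 y1 where p: "P = Some (x1, y1)" using Some by (cases p) auto
  show ?thesis
  proof (cases R)
    case None then show ?thesis using p by (simp add: ec_add_def)
  next
    case (Some r)
    obtain x2 y2 where r: "R = Some (x2, y2)" using Some by (cases r) auto
    have ex: "(u^2 * x1 = u^2 * x2) \<longleftrightarrow> x1 = x2" using u by simp
    have ey: "(u^3 * y1 + u^3 * y2 = 0) \<longleftrightarrow> y1 + y2 = 0"
      using u by (metis distrib_left mult_eq_0_iff power_not_zero)
    show ?thesis
    proof (cases "x1 = x2 \<and> y1 + y2 = 0")
      case True then show ?thesis using p r ex ey by (simp add: ec_add_def)
    next
      case False
      define l where "l = (if x1 = x2 then (3 * x1 ^ 2 + 2 * a2 * x1 + a4) / (2 * y1) else (y2 - y1) / (x2 - x1))"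
      define l' where "l' = (if u^2 * x1 = u^2 * x2 then (3 * (u^2 * x1) ^ 2 + 2 * (u^2 * a2) * (u^2 * x1) + u^4 * a4) / (2 * (u^3 * y1))
        else (u^3 * y2 - u^3 * y1) / (u^2 * x2 - u^2 * x1))"
      have ll: "l' = u * l"
      proof (cases "x1 = x2")
        case True
        have "(3 * (u^2 * x1) ^ 2 + 2 * (u^2 * a2) * (u^2 * x1) + u^4 * a4) = u^4 * (3 * x1 ^ 2 + 2 * a2 * x1 + a4)"
          by (simp add: power2_eq_square power4_eq_xxxx algebra_simps)
        moreover have "2 * (u^3 * y1) = u^3 * (2 * y1)" by simp
        ultimately show ?thesis unfolding l'_def l_def using True u
          by (simp add: power2_eq_square power3_eq_cube power4_eq_xxxx)
      next
        case False
        have "u^3 * y2 - u^3 * y1 = u^3 * (y2 - y1)" by (simp add: algebra_simps)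
        moreover have "u^2 * x2 - u^2 * x1 = u^2 * (x2 - x1)" by (simp add: algebra_simps)
        ultimately show ?thesis unfolding l'_def l_def using False u
          by (simp add: power2_eq_square power3_eq_cube)
      qed
      have lhs: "ec_add (u^2 * a2) (u^4 * a4) (sc u P) (sc u R) =
        Some (l'^2 - u^2 * a2 - u^2 * x1 - u^2 * x2, - (l' * ((l'^2 - u^2 * a2 - u^2 * x1 - u^2 * x2) - u^2 * x1) + u^3 * y1))"
        using p r False ex ey unfolding l'_def by (simp add: ec_add_def Let_def)
      have rhs: "ec_add a2 a4 P R = Some (l^2 - a2 - x1 - x2, - (l * ((l^2 - a2 - x1 - x2) - x1) + y1))"
        using p r False unfolding l_def by (simp add: ec_add_def Let_def)
      show ?thesis unfolding lhs rhs ll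
        by (simp add: power2_eq_square power3_eq_cube algebra_simps)
    qed
  qed
qed

lemma ec_mult_scale:
  fixes u a2 a4 :: "'k::field"
  assumes u: "u \<noteq> 0"
  shows "ec_mult (u^2 * a2) (u^4 * a4) n (sc u P) = sc u (ec_mult a2 a4 n P)"
  by (induction n) (simp_all add: ec_add_scale[OF u])


locale fhom =
  fixes S :: "'k::field set" and h :: "'k \<Rightarrow> 'l::field"
  assumes add_S: "x \<in> S \<Longrightarrow> y \<in> S \<Longrightarrow> x + y \<in> S"
  and mult_S: "x \<in> S \<Longrightarrow> y \<in> S \<Longrightarrow> x * y \<in> S"
  and uminus_S: "x \<in> S \<Longrightarrow> - x \<in> S"
  and inverse_S: "x \<in> S \<Longrightarrow> inverse x \<in> S"
  and one_S: "1 \<in> S"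
  and h_add: "x \<in> S \<Longrightarrow> y \<in> S \<Longrightarrow> h (x + y) = h x + h y"
  and h_mult: "x \<in> S \<Longrightarrow> y \<in> S \<Longrightarrow> h (x * y) = h x * h y"
  and h_one: "h 1 = 1"
  and h_inj: "x \<in> S \<Longrightarrow> h x = 0 \<Longrightarrow> x = 0"
begin

lemma zero_S: "0 \<in> S" using add_S[OF one_S uminus_S[OF one_S]] by simp
lemma diff_S: "x \<in> S \<Longrightarrow> y \<in> S \<Longrightarrow> x - y \<in> S" using add_S uminus_S by (metis diff_conv_add_uminus)
lemma divide_S: "x \<in> S \<Longrightarrow> y \<in> S \<Longrightarrow> x / y \<in> S" using mult_S inverse_S by (simp add: divide_inverse)
lemma pow_S: "x \<in> S \<Longrightarrow> x ^ n \<in> S" by (induction n) (simp_all add: one_S mult_S)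
lemma two_S: "2 \<in> S" using add_S[OF one_S one_S] by simp
lemma three_S: "3 \<in> S" using add_S[OF two_S one_S] by simp

lemma h_zero: "h 0 = 0"
proof -
  have "h (0 + 0) = h 0 + h 0" by (rule h_add[OF zero_S zero_S])
  then have "h 0 + h 0 = h 0 + 0" by simp
  then show ?thesis by (rule add_left_imp_eq)
qed
lemma h_uminus: "x \<in> S \<Longrightarrow> h (- x) = - h x"
proof -
  assume xS: "x \<in> S"
  have "h (x + - x) = h x + h (- x)" by (rule h_add[OF xS uminus_S[OF xS]])
  then have "h x + h (- x) = 0" using h_zero by simp
  then show ?thesis by (simp add: add_eq_0_iff)
qed
lemma h_diff: "x \<in> S \<Longrightarrow> y \<in> S \<Longrightarrow> h (x - y) = h x - h y"
proof -
  assume xS: "x \<in> S" and yS: "y \<in> S"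
  have "h (x + - y) = h x + h (- y)" by (rule h_add[OF xS uminus_S[OF yS]])
  then show ?thesis using h_uminus[OF yS] by simp
qed
lemma h_inverse: "x \<in> S \<Longrightarrow> h (inverse x) = inverse (h x)"
proof (cases "x = 0")
  case True then show ?thesis by (simp add: h_zero)
next
  case False
  assume xS: "x \<in> S"
  have "h x * h (inverse x) = 1" using h_mult[OF xS inverse_S[OF xS]] False h_one by simp
  then show ?thesis by (metis inverse_unique)
qed
lemma h_divide: "x \<in> S \<Longrightarrow> y \<in> S \<Longrightarrow> h (x / y) = h x / h y"
  by (simp add: divide_inverse h_mult inverse_S h_inverse)
lemma h_pow: "x \<in> S \<Longrightarrow> h (x ^ n) = h x ^ n"
  by (induction n) (simp_all add: h_one h_mult pow_S)
lemma h_two: "h 2 = 2"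
  using h_add[OF one_S one_S] h_one by simp
lemma h_three: "h 3 = 3"
  using h_add[OF two_S one_S] h_one h_two by simp

lemma h_eq_iff: "x \<in> S \<Longrightarrow> y \<in> S \<Longrightarrow> h x = h y \<longleftrightarrow> x = y"
  using h_inj[OF diff_S] h_diff by fastforce
lemma h_zero_iff: "x \<in> S \<Longrightarrow> h x = 0 \<longleftrightarrow> x = 0"
  using h_inj h_zero by blast

lemmas Scl = add_S mult_S uminus_S diff_S divide_S pow_S two_S three_S one_S zero_S
lemmas hcl = h_add h_mult h_uminus h_diff h_divide h_pow h_two h_three h_one h_zero

definition ptS :: "'k ec_point \<Rightarrow> bool" where
  "ptS P \<longleftrightarrow> (\<forall>x y. P = Some (x, y) \<longrightarrow> x \<in> S \<and> y \<in> S)"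

definition mp :: "'k ec_point \<Rightarrow> 'l ec_point" where
  "mp P = map_option (\<lambda>(x, y). (h x, h y)) P"

lemma mp_simps[simp]: "mp None = None" "mp (Some (x, y)) = Some (h x, h y)"
  by (simp_all add: mp_def)

lemma ec_add_hom:
  assumes a2: "a2 \<in> S" and a4: "a4 \<in> S" and P: "ptS P" and R: "ptS R"
  shows "ec_add (h a2) (h a4) (mp P) (mp R) = mp (ec_add a2 a4 P R) \<and> ptS (ec_add a2 a4 P R)"
proof (cases P)
  case None then show ?thesis using R by (simp add: ec_add_def)
next
  case (Some p)
  obtain x1 y1 where p: "P = Some (x1, y1)" using Some by (cases p) auto
  have x1: "x1 \<in> S" and y1: "y1 \<in> S" using P p by (auto simp: ptS_def)
  show ?thesis
  proof (cases R)
    case None then show ?thesis using p P by (simp add: ec_add_def)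
  next
    case (Some r)
    obtain x2 y2 where r: "R = Some (x2, y2)" using Some by (cases r) auto
    have x2: "x2 \<in> S" and y2: "y2 \<in> S" using R r by (auto simp: ptS_def)
    have ex: "(h x1 = h x2) \<longleftrightarrow> x1 = x2" using h_eq_iff[OF x1 x2] .
    have ey: "(h y1 + h y2 = 0) \<longleftrightarrow> y1 + y2 = 0" using h_zero_iff[OF add_S[OF y1 y2]] h_add[OF y1 y2] by simp
    show ?thesis
    proof (cases "x1 = x2 \<and> y1 + y2 = 0")
      case True then show ?thesis using p r ex ey by (simp add: ec_add_def ptS_def)
    next
      case False
      define l where "l = (if x1 = x2 then (3 * x1 ^ 2 + 2 * a2 * x1 + a4) / (2 * y1) else (y2 - y1) / (x2 - x1))"
      have lS: "l \<in> S" unfolding l_def using x1 x2 y1 y2 a2 a4 by (simp add: Scl)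
      have hl: "h l = (if h x1 = h x2 then (3 * h x1 ^ 2 + 2 * h a2 * h x1 + h a4) / (2 * h y1) else (h y2 - h y1) / (h x2 - h x1))"
        unfolding l_def ex using x1 x2 y1 y2 a2 a4 by (simp add: Scl hcl)
      define x3 where "x3 = l^2 - a2 - x1 - x2"
      define y3 where "y3 = - (l * (x3 - x1) + y1)"
      have x3S: "x3 \<in> S" unfolding x3_def using lS x1 x2 a2 by (simp add: Scl)
      have y3S: "y3 \<in> S" unfolding y3_def using lS x3S x1 y1 by (simp add: Scl)
      have hx3: "h x3 = (h l)^2 - h a2 - h x1 - h x2" unfolding x3_def using lS x1 x2 a2 by (simp add: Scl hcl)
      have hy3: "h y3 = - (h l * (h x3 - h x1) + h y1)" unfolding y3_def using lS x3S x1 y1 by (simp add: Scl hcl)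
      have rhs: "ec_add a2 a4 P R = Some (x3, y3)"
        using p r False unfolding x3_def y3_def l_def by (simp add: ec_add_def Let_def)
      have lhs: "ec_add (h a2) (h a4) (mp P) (mp R) = Some (h x3, h y3)"
        using p r False ex ey unfolding hx3 hy3 hl by (simp add: ec_add_def Let_def)
      show ?thesis using lhs rhs x3S y3S by (simp add: ptS_def)
    qed
  qed
qed

lemma ec_mult_hom:
  assumes a2: "a2 \<in> S" and a4: "a4 \<in> S" and P: "ptS P"
  shows "ec_mult (h a2) (h a4) n (mp P) = mp (ec_mult a2 a4 n P) \<and> ptS (ec_mult a2 a4 n P)"
proof (induction n)
  case 0 then show ?case by (simp add: ptS_def)
next
  case (Suc n)
  then show ?case using ec_add_hom[OF a2 a4 P, of "ec_mult a2 a4 n P"] by simp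
qed

end


definition Pk :: "'a::field poly set" where "Pk = {q. \<forall>i. coeff q i \<in> \<int>}"

lemma Pk_add: "p \<in> Pk \<Longrightarrow> q \<in> Pk \<Longrightarrow> p + q \<in> Pk" by (simp add: Pk_def Ints_add)
lemma Pk_uminus: "p \<in> Pk \<Longrightarrow> - p \<in> Pk" by (simp add: Pk_def Ints_minus)
lemma Pk_mult: "p \<in> Pk \<Longrightarrow> q \<in> Pk \<Longrightarrow> p * q \<in> Pk"
  unfolding Pk_def by (auto simp: coeff_mult intro!: Ints_sum Ints_mult)
lemma Pk_0: "0 \<in> Pk" by (simp add: Pk_def)
lemma Pk_1: "1 \<in> Pk" by (simp add: Pk_def coeff_1)
lemma Pk_X: "pX \<in> Pk" by (simp add: Pk_def coeff_pCons split: nat.split)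
lemma Pk_reflect: "p \<in> Pk \<Longrightarrow> reflect_poly p \<in> Pk" by (simp add: Pk_def coeff_reflect_poly)

abbreviation W4 :: "'a::field poly" where "W4 \<equiv> pX ^ 4"

lemma degW4: "degree (W4 :: 'a::field poly) = 4" by (simp add: degree_linear_power)

lemma pc_nz:
  fixes b :: "'a::field poly"
  assumes b: "b \<noteq> 0" shows "pcompose b W4 \<noteq> 0"
proof
  assume e: "pcompose b W4 = 0"
  have "0 < degree (W4 :: 'a poly)" by (simp add: degree_linear_power)
  with e have "b = 0" by (rule pcompose_eq_0)
  with b show False by simp
qed

lemma pc_inj:
  fixes a b :: "'a::field poly"
  shows "pcompose a W4 = pcompose b W4 \<Longrightarrow> a = b"
proof -
  assume "pcompose a W4 = pcompose b W4"
  then have "pcompose (a - b) W4 = 0" by (simp add: pcompose_diff)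
  moreover have "0 < degree (W4 :: 'a poly)" by (simp add: degree_linear_power)
  ultimately have "a - b = 0" by (rule pcompose_eq_0)
  then show "a = b" by simp
qed

definition SS :: "'a::field poly fract set" where
  "SS = {f. \<exists>a b. a \<in> Pk \<and> b \<in> Pk \<and> b \<noteq> 0 \<and> f = Fract (pcompose a W4) (pcompose b W4)}"

definition hh :: "'a::field \<Rightarrow> 'a poly fract \<Rightarrow> 'a" where
  "hh s f = (SOME v. \<exists>a b. a \<in> Pk \<and> b \<in> Pk \<and> b \<noteq> 0 \<and> f = Fract (pcompose a W4) (pcompose b W4) \<and> v = poly a s / poly b s)"

context
  fixes s :: "'a::field"
  assumes tr: "\<And>q. q \<in> Pk \<Longrightarrow> q \<noteq> 0 \<Longrightarrow> poly q s \<noteq> 0"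
begin

lemma hh_Fract:
  assumes a: "a \<in> Pk" and b: "b \<in> Pk" "b \<noteq> 0"
  shows "hh s (Fract (pcompose a W4) (pcompose b W4)) = poly a s / poly b s"
proof -
  let ?f = "Fract (pcompose a W4) (pcompose b W4)"
  let ?P = "\<lambda>v. \<exists>a' b'. a' \<in> Pk \<and> b' \<in> Pk \<and> b' \<noteq> 0 \<and> ?f = Fract (pcompose a' W4) (pcompose b' W4) \<and> v = poly a' s / poly b' s"
  have "?P (poly a s / poly b s)" using a b by blast
  then have "?P (SOME v. ?P v)" by (rule someI)
  then obtain a' b' where h: "a' \<in> Pk" "b' \<in> Pk" "b' \<noteq> 0" "?f = Fract (pcompose a' W4) (pcompose b' W4)"
    "(SOME v. ?P v) = poly a' s / poly b' s" by blast
  have "pcompose a W4 * pcompose b' W4 = pcompose a' W4 * pcompose b W4"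
    using h(4) pc_nz[OF b(2)] pc_nz[OF h(3)] by (simp add: eq_fract)
  then have "pcompose (a * b') W4 = pcompose (a' * b) W4" by (simp add: pcompose_mult)
  then have "a * b' = a' * b" by (rule pc_inj)
  then have "poly a s * poly b' s = poly a' s * poly b s" by (metis poly_mult)
  moreover have "poly b s \<noteq> 0" "poly b' s \<noteq> 0" using tr b h by auto
  ultimately have "poly a s / poly b s = poly a' s / poly b' s" by (simp add: field_simps)
  then show ?thesis unfolding hh_def using h(5) by simp
qed

lemma SS_elim:
  assumes "f \<in> SS"
  obtains a b where "a \<in> Pk" "b \<in> Pk" "b \<noteq> 0" "f = Fract (pcompose a W4) (pcompose b W4)"
  using assms unfolding SS_def by blast

lemma SS_I: "a \<in> Pk \<Longrightarrow> b \<in> Pk \<Longrightarrow> b \<noteq> 0 \<Longrightarrow> Fract (pcompose a W4) (pcompose b W4) \<in> SS"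
  unfolding SS_def by blast

lemma fhom_SS: "fhom SS (hh s)"
proof
  fix x y :: "'a poly fract" assume x: "x \<in> SS" and y: "y \<in> SS"
  obtain a b where ab: "a \<in> Pk" "b \<in> Pk" "b \<noteq> 0" "x = Fract (pcompose a W4) (pcompose b W4)" using x by (rule SS_elim)
  obtain c d where cd: "c \<in> Pk" "d \<in> Pk" "d \<noteq> 0" "y = Fract (pcompose c W4) (pcompose d W4)" using y by (rule SS_elim)
  have bd: "b * d \<noteq> 0" "b * d \<in> Pk" using ab cd by (simp_all add: Pk_mult)
  have pb: "poly b s \<noteq> 0" "poly d s \<noteq> 0" using tr ab cd by auto
  have sum: "x + y = Fract (pcompose (a * d + c * b) W4) (pcompose (b * d) W4)"
    using ab cd pc_nz[OF ab(3)] pc_nz[OF cd(3)] by (simp add: pcompose_add pcompose_mult)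
  have prod: "x * y = Fract (pcompose (a * c) W4) (pcompose (b * d) W4)"
    using ab cd by (simp add: pcompose_mult)
  have adcb: "a * d + c * b \<in> Pk" "a * c \<in> Pk" using ab cd by (simp_all add: Pk_add Pk_mult)
  show "x + y \<in> SS" unfolding sum using adcb bd by (intro SS_I)
  show "x * y \<in> SS" unfolding prod using adcb bd by (intro SS_I)
  show "hh s (x + y) = hh s x + hh s y"
    unfolding sum using ab cd adcb bd pb by (simp add: hh_Fract field_simps)
  show "hh s (x * y) = hh s x * hh s y"
    unfolding prod using ab cd adcb bd pb by (simp add: hh_Fract)
next
  fix x :: "'a poly fract" assume x: "x \<in> SS"
  obtain a b where ab: "a \<in> Pk" "b \<in> Pk" "b \<noteq> 0" "x = Fract (pcompose a W4) (pcompose b W4)" using x by (rule SS_elim)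
  have "- x = Fract (pcompose (- a) W4) (pcompose b W4)" using ab by (simp add: pcompose_uminus)
  then show "- x \<in> SS" using ab Pk_uminus by (metis SS_I)
  show "inverse x \<in> SS"
  proof (cases "a = 0")
    case True
    then have "inverse x = Fract (pcompose 0 W4) (pcompose 1 W4)" using ab by (simp add: fract_collapse)
    then show ?thesis using Pk_0 Pk_1 by (metis SS_I one_neq_zero)
  next
    case False
    then have "inverse x = Fract (pcompose b W4) (pcompose a W4)" using ab by simp
    then show ?thesis using ab False by (metis SS_I)
  qed
  assume "hh s x = 0"
  then have "poly a s / poly b s = 0" using ab by (simp add: hh_Fract)
  then have "poly a s = 0" using tr ab by auto
  then have "a = 0" using tr ab by blast
  then show "x = 0" using ab by (simp add: fract_collapse)
next
  show "1 \<in> SS" using SS_I[OF Pk_1 Pk_1] by (simp add: One_fract_def)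
  show "hh s 1 = 1" using hh_Fract[OF Pk_1 Pk_1] by (simp add: One_fract_def)
qed

lemma W4_SS: "(Wv :: 'a poly fract)^4 \<in> SS" and hh_W4: "hh s (Wv^4) = s"
proof -
  have e: "(Wv :: 'a poly fract)^4 = Fract (pcompose pX W4) (pcompose 1 W4)"
    by (simp add: Wv_def pcompose_pCons Fract_pow1 flip: Fract_pow1)
  show "(Wv :: 'a poly fract)^4 \<in> SS" unfolding e by (rule SS_I[OF Pk_X Pk_1]) simp
  show "hh s (Wv^4) = s" unfolding e using hh_Fract[OF Pk_X Pk_1] by simp
qed

end


lemma general:
  fixes t :: "'a::field"
  assumes two: "(2::'a) \<noteq> 0" and tr: "transcendental_over_prime_field t"
  shows "on_curve t (- (t ^ 3)) (Some (- t, t ^ 2)) \<and> ec_infinite_order t (- (t ^ 3)) (Some (- t, t ^ 2))"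
proof
  show "on_curve t (- (t ^ 3)) (Some (- t, t ^ 2))"
    unfolding on_curve_def by (simp add: power2_eq_square power3_eq_cube)
  have trPk: "poly q t \<noteq> 0" if "q \<in> Pk" "q \<noteq> 0" for q
    using tr that unfolding transcendental_over_prime_field_def Pk_def Ints_def by blast
  have t0: "t \<noteq> 0" using trPk[OF Pk_X] by simp
  define s where "s = inverse t"
  have trs: "poly q s \<noteq> 0" if q: "q \<in> Pk" "q \<noteq> 0" for q
  proof
    assume "poly q s = 0"
    then have "poly (reflect_poly q) t = 0" using poly_reflect_poly_nz[OF t0, of q] unfolding s_def by simp
    moreover have "reflect_poly q \<in> Pk" using q(1) by (rule Pk_reflect)
    moreover have "reflect_poly q \<noteq> 0" using q by simp
    ultimately show False using trPk by blast
  qed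
  interpret F: fhom SS "hh s" by (rule fhom_SS[OF trs])
  define tK where "tK = inverse ((Wv :: 'a poly fract)^4)"
  have W4S: "(Wv :: 'a poly fract)^4 \<in> SS" by (rule W4_SS[OF trs])
  have tKS: "tK \<in> SS" unfolding tK_def using W4S by (rule F.inverse_S)
  have htK: "hh s tK = t" unfolding tK_def using F.h_inverse[OF W4S] hh_W4[OF trs] s_def by simp
  have a4S: "- (tK ^ 3) \<in> SS" using tKS by (simp add: F.Scl)
  have ptQ: "F.ptS (Some (- tK, tK ^ 2))" using tKS by (simp add: F.ptS_def F.Scl)
  have ha4: "hh s (- (tK ^ 3)) = - (t ^ 3)" using tKS htK by (simp add: F.Scl F.hcl)
  have mpQ: "F.mp (Some (- tK, tK ^ 2)) = Some (- t, t ^ 2)" using tKS htK by (simp add: F.Scl F.hcl)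
  have hom: "ec_mult t (- (t ^ 3)) n (Some (- t, t ^ 2)) = F.mp (ec_mult tK (- (tK ^ 3)) n (Some (- tK, tK ^ 2)))" for n
    using F.ec_mult_hom[OF tKS a4S ptQ, of n] htK ha4 mpQ by simp
  define u where "u = (Wv :: 'a poly fract)^3"
  have u0: "u \<noteq> 0" by (simp add: u_def)
  have W0: "(Wv :: 'a poly fract) \<noteq> 0" by simp
  have e1: "u^2 * tK = Wv^2" unfolding u_def tK_def using W0 by (simp add: field_simps eval_nat_numeral)
  have e2: "u^4 * (- (tK ^ 3)) = -1" unfolding u_def tK_def using W0 by (simp add: field_simps eval_nat_numeral)
  have e3: "sc u (Some (- tK, tK ^ 2)) = Some (- (Wv^2), Wv)" unfolding u_def tK_def using W0
    by (simp add: field_simps eval_nat_numeral)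
  have scl: "PP n = sc u (ec_mult tK (- (tK ^ 3)) n (Some (- tK, tK ^ 2)))" for n
    using ec_mult_scale[OF u0, of tK "- (tK ^ 3)" n "Some (- tK, tK ^ 2)"] e1 e2 e3 by simp
  show "ec_infinite_order t (- (t ^ 3)) (Some (- t, t ^ 2))"
    unfolding ec_infinite_order_def
  proof (intro allI impI)
    fix n :: nat assume n: "0 < n"
    have "(PP n :: 'a poly fract ec_point) \<noteq> None" by (rule core[OF two n])
    then have "ec_mult tK (- (tK ^ 3)) n (Some (- tK, tK ^ 2)) \<noteq> None" using scl[of n] by (metis sc_simps(1))
    then show "ec_mult t (- (t ^ 3)) n (Some (- t, t ^ 2)) \<noteq> None" unfolding hom by (auto simp: F.mp_def)
  qed
qed


lemma of_int_fract_eq: "(of_int k :: 'b::idom fract) = Fract (of_int k) 1"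
proof (cases k rule: int_cases)
  case (nonneg n) then show ?thesis by (simp add: of_nat_fract)
next
  case (neg n)
  have "(of_int k :: 'b fract) = - of_nat (Suc n)" using neg by simp
  also have "\<dots> = - Fract (of_nat (Suc n)) 1" by (simp only: of_nat_fract)
  also have "\<dots> = Fract (- of_nat (Suc n)) 1" by simp
  finally show ?thesis using neg by simp
qed

lemma Wv_transc: "transcendental_over_prime_field (Wv :: 'b::field poly fract)"
proof -
  have main: "(\<forall>i. coeff q i \<in> range of_int) \<longrightarrow> (\<exists>q'. poly q Wv = Fract q' 1 \<and> (q \<noteq> 0 \<longrightarrow> q' \<noteq> 0))"
    for q :: "'b poly fract poly"
  proof (induction q)
    case 0 then show ?case by (auto intro!: exI[of _ 0] simp: fract_collapse)
  next
    case (pCons c r)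
    show ?case
    proof
      assume co: "\<forall>i. coeff (pCons c r) i \<in> range of_int"
      then have "\<forall>i. coeff r i \<in> range of_int" by (metis coeff_pCons_Suc)
      then obtain r' where r': "poly r Wv = Fract r' 1" "r \<noteq> 0 \<longrightarrow> r' \<noteq> 0" using pCons.IH by blast
      have "c \<in> range of_int" using co by (metis coeff_pCons_0)
      then obtain k where k: "c = of_int k" by blast
      have cF: "c = Fract (of_int k) 1" using k of_int_fract_eq by simp
      have "poly (pCons c r) Wv = Fract (pCons (of_int k) r') 1"
        using r'(1) cF by (simp add: Wv_def of_int_poly algebra_simps)
      moreover have "pCons c r \<noteq> 0 \<longrightarrow> pCons (of_int k) r' \<noteq> 0"
      proof
        assume nz: "pCons c r \<noteq> 0"
        show "pCons (of_int k) r' \<noteq> 0"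
        proof (cases "r = 0")
          case True
          then have "c \<noteq> 0" using nz by simp
          then have "(of_int k :: 'b poly) \<noteq> 0" using cF by (auto simp: fract_collapse)
          then show ?thesis by (simp add: of_int_poly)
        next
          case False then show ?thesis using r'(2) by simp
        qed
      qed
      ultimately show "\<exists>q'. poly (pCons c r) Wv = Fract q' 1 \<and> (pCons c r \<noteq> 0 \<longrightarrow> q' \<noteq> 0)" by blast
    qed
  qed
  show ?thesis unfolding transcendental_over_prime_field_def
  proof (intro allI impI)
    fix q :: "'b poly fract poly" assume q: "q \<noteq> 0 \<and> (\<forall>i. coeff q i \<in> range of_int)"
    then obtain q' where "poly q Wv = Fract q' 1" "q' \<noteq> 0" using main by blast
    then show "poly q Wv \<noteq> 0" by (simp add: Zero_fract_def eq_fract)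
  qed
qed

theorem corollary2p6:
  shows
   "(\<forall>T :: 'p::prime_card mod_ring poly fract.
       CARD('p) \<noteq> 2 \<longrightarrow> T = Fract [:0, 1:] 1 \<longrightarrow>
         on_curve T (- (T ^ 3)) (Some (- T, T ^ 2)) \<and>
         ec_infinite_order T (- (T ^ 3)) (Some (- T, T ^ 2)))
    \<and>
    (\<forall>(p::nat) (t :: 'a::field).
       prime p \<longrightarrow> p \<noteq> 2 \<longrightarrow> CHAR('a) = p \<longrightarrow> transcendental_over_prime_field t \<longrightarrow>
         on_curve t (- (t ^ 3)) (Some (- t, t ^ 2)) \<and>
         ec_infinite_order t (- (t ^ 3)) (Some (- t, t ^ 2)))"
proof (intro conjI allI impI)
  fix T :: "'p::prime_card mod_ring poly fract"
  assume c: "CARD('p) \<noteq> 2" and T: "T = Fract [:0, 1:] 1"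
  have two: "(2 :: 'p mod_ring) \<noteq> 0"
  proof
    assume "(2 :: 'p mod_ring) = 0"
    then have "(of_nat 2 :: 'p mod_ring) = 0" by simp
    then have "CARD('p) dvd 2" by (rule of_nat_0_mod_ring_dvd)
    moreover have "prime CARD('p)" by (rule prime_card)
    ultimately have "CARD('p) = 2"
    proof -
      assume d: "CARD('p) dvd 2" and pr: "prime CARD('p)"
      have "CARD('p) = 1 \<or> CARD('p) = 2" using d two_is_prime_nat prime_nat_iff by blast
      then show ?thesis using prime_gt_1_nat[OF pr] by auto
    qed
    then show False using c by simp
  qed
  have two': "(2 :: 'p mod_ring poly fract) \<noteq> 0" by (rule two_nz[OF two])
  have tr: "transcendental_over_prime_field T" unfolding T using Wv_transc by (simp add: Wv_def)
  show "on_curve T (- (T ^ 3)) (Some (- T, T ^ 2))" using general[OF two' tr] by blast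
  show "ec_infinite_order T (- (T ^ 3)) (Some (- T, T ^ 2))" using general[OF two' tr] by blast
next
  fix p :: nat and t :: "'a::field"
  assume p: "prime p" "p \<noteq> 2" "CHAR('a) = p" and tr: "transcendental_over_prime_field t"
  have two: "(2 :: 'a) \<noteq> 0"
  proof
    assume "(2 :: 'a) = 0"
    then have "(of_nat 2 :: 'a) = 0" by simp
    then have "p dvd 2" using p(3) of_nat_eq_0_iff_char_dvd by metis
    then have "p = 1 \<or> p = 2" using two_is_prime_nat prime_nat_iff by blast
    then have "p = 2" using prime_gt_1_nat[OF p(1)] by auto
    then show False using p(2) by simp
  qed
  show "on_curve t (- (t ^ 3)) (Some (- t, t ^ 2))" using general[OF two tr] by blast
  show "ec_infinite_order t (- (t ^ 3)) (Some (- t, t ^ 2))" using general[OF two tr] by blast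
qed


end
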